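(* Let $\lambda_0,\dots,\lambda_n\in\mathbb{C}$ ($n\ge1$) with $\lambda_0=\lambda_1$ real. Suppose $E_{(\lambda_0,\dots,\lambda_n)}$ is closed under complex conjugation and $0<b-a<\pi/M_n$, where $M_n:=\max\{|\mathrm{Im}\,\lambda_j|:j=0,\dots,n\}$ (no restriction if $M_n=0$). Then there exist unique nodes $a=t_0\le t_1\le\dots\le t_n=b$ and unique positive numbers $\alpha_0,\dots,\alpha_n$ such that the operator $B_{(\lambda_0,\dots,\lambda_n)}f=\sum_{k=0}^n\alpha_kf(t_k)\,p_{(\lambda_0,\dots,\lambda_n),k}$, $f\in C[a,b]$, fixes the functions $e^{\lambda_0x}$ and $xe^{\lambda_0x}$.
   Context: $E_{(\lambda_0,\dots,\lambda_n)}$ denotes the space of all $f\in C^\infty(\mathbb{R},\mathbb{C})$ with $(\frac{d}{dx}-\lambda_0)\cdots(\frac{d}{dx}-\lambda_n)f=0$ (dimension $n+1$; with $\lambda_0=\lambda_1$ it contains $e^{\lambda_0x}$ and $xe^{\lambda_0x}$); it is closed under complex conjugation if $\overline f$ lies in it whenever $f$ does. A zero of order (exactly) $k$ at $a$ means $f(a)=\dots=f^{(k-1)}(a)=0$, $f^{(k)}(a)\neq0$. Under the hypotheses the space is an extended Chebyshev system over $[a,b]$ (every nonzero element has at most $n$ zeros in $[a,b]$ with multiplicity), and its Bernstein basis $p_{(\lambda_0,\dots,\lambda_n),k}$, $k=0,\dots,n$, w.r.t. $a,b$ is the unique family in the space with a zero of order exactly $k$ at $a$, exactly $n-k$ at $b$,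 and $p^{(k)}_{(\lambda_0,\dots,\lambda_n),k}(a)=1$. *)

theory Defs
  imports "HOL-Analysis.Analysis"
begin

definition Dop :: "(real \<Rightarrow> complex) \<Rightarrow> real \<Rightarrow> complex" where
  "Dop f = (\<lambda>x. vector_derivative f (at x))"

definition smooth_fun :: "(real \<Rightarrow> complex) \<Rightarrow> bool" where
  "smooth_fun f \<longleftrightarrow> (\<forall>k x. (Dop ^^ k) f differentiable (at x))"

fun diffop :: "complex list \<Rightarrow> (real \<Rightarrow> complex) \<Rightarrow> real \<Rightarrow> complex" where
  "diffop [] f = f"
| "diffop (l # ls) f = (\<lambda>x. Dop (diffop ls f) x - l * diffop ls f x)"

definition ESpace :: "(nat \<Rightarrow> complex) \<Rightarrow> nat \<Rightarrow> (real \<Rightarrow> complex) set" where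
  "ESpace lam n = {f. smooth_fun f \<and> (\<forall>x. diffop (map lam [0..<Suc n]) f x = 0)}"

definition closed_cnj :: "(real \<Rightarrow> complex) set \<Rightarrow> bool" where
  "closed_cnj E \<longleftrightarrow> (\<forall>f\<in>E. (\<lambda>x. cnj (f x)) \<in> E)"

definition zero_order :: "(real \<Rightarrow> complex) \<Rightarrow> real \<Rightarrow> nat \<Rightarrow> bool" where
  "zero_order f a k \<longleftrightarrow> (\<forall>i<k. (Dop ^^ i) f a = 0) \<and> (Dop ^^ k) f a \<noteq> 0"

definition Mn :: "(nat \<Rightarrow> complex) \<Rightarrow> nat \<Rightarrow> real" where
  "Mn lam n = Max {\<bar>Im (lam j)\<bar> | j. j \<le> n}"

definition bernstein :: "(nat \<Rightarrow> complex) \<Rightarrow> nat \<Rightarrow> real \<Rightarrow> real \<Rightarrow> nat \<Rightarrow> real \<Rightarrow> complex" where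
  "bernstein lam n a b k = (THE p. p \<in> ESpace lam n \<and> zero_order p a k \<and> zero_order p b (n - k)
      \<and> (Dop ^^ k) p a = 1)"

definition Bop :: "(nat \<Rightarrow> complex) \<Rightarrow> nat \<Rightarrow> real \<Rightarrow> real \<Rightarrow> (nat \<Rightarrow> real) \<Rightarrow> (nat \<Rightarrow> real)
    \<Rightarrow> (real \<Rightarrow> complex) \<Rightarrow> real \<Rightarrow> complex" where
  "Bop lam n a b t \<alpha> f = (\<lambda>x. \<Sum>k\<le>n. complex_of_real (\<alpha> k) * f (t k) * bernstein lam n a b k x)"

definition good_nodes :: "(nat \<Rightarrow> complex) \<Rightarrow> nat \<Rightarrow> real \<Rightarrow> real \<Rightarrow> (nat \<Rightarrow> real) \<Rightarrow> (nat \<Rightarrow> real) \<Rightarrow> bool" where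
  "good_nodes lam n a b t \<alpha> \<longleftrightarrow>
     t 0 = a \<and> t n = b \<and> (\<forall>k<n. t k \<le> t (Suc k)) \<and> (\<forall>k\<le>n. \<alpha> k > 0) \<and>
     (\<forall>x\<in>{a..b}. Bop lam n a b t \<alpha> (\<lambda>y. exp (lam 0 * complex_of_real y)) x
                   = exp (lam 0 * complex_of_real x)) \<and>
     (\<forall>x\<in>{a..b}. Bop lam n a b t \<alpha> (\<lambda>y. complex_of_real y * exp (lam 0 * complex_of_real y)) x
                   = complex_of_real x * exp (lam 0 * complex_of_real x))"

end

theory Submission
  imports Defs
begin


lemma Dop_at: "(f has_vector_derivative d) (at x) \<Longrightarrow> Dop f x = d"
  by (simp add: Dop_def vector_derivative_at)

lemma Dop_works: "f differentiable (at x) \<Longrightarrow> (f has_vector_derivative Dop f x) (at x)"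
  by (simp add: Dop_def vector_derivative_works[symmetric])

lemma funpow_Dop_Suc: "(Dop ^^ Suc k) f = (Dop ^^ k) (Dop f)"
  by (simp add: funpow_swap1)

lemma smooth_diff: "smooth_fun f \<Longrightarrow> f differentiable (at x)"
  unfolding smooth_fun_def by (metis funpow_0)

lemma smooth_Dop: "smooth_fun f \<Longrightarrow> smooth_fun (Dop f)"
  unfolding smooth_fun_def by (metis funpow_Dop_Suc)

lemma smooth_Dk: "smooth_fun f \<Longrightarrow> smooth_fun ((Dop ^^ k) f)"
  unfolding smooth_fun_def by (metis funpow_add comp_apply)

lemma smooth_Dk_diff: "smooth_fun f \<Longrightarrow> (Dop ^^ k) f differentiable (at x)"
  unfolding smooth_fun_def by blast

lemma smooth_Dk_hasder: "smooth_fun f \<Longrightarrow> ((Dop ^^ k) f has_vector_derivative (Dop ^^ Suc k) f x) (at x)"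
  using Dop_works[OF smooth_Dk_diff] by simp

lemma smooth_cont: "smooth_fun f \<Longrightarrow> continuous_on S f"
  by (meson continuous_at_imp_continuous_on differentiable_imp_continuous_within smooth_diff)

lemma smooth_Dk_cont: "smooth_fun f \<Longrightarrow> continuous_on S ((Dop ^^ k) f)"
  using smooth_Dk smooth_cont by blast

lemma Dop_add: "f differentiable (at x) \<Longrightarrow> g differentiable (at x) \<Longrightarrow>
   Dop (\<lambda>x. f x + g x) x = Dop f x + Dop g x"
  by (intro Dop_at derivative_intros Dop_works)

lemma Dop_diff: "f differentiable (at x) \<Longrightarrow> g differentiable (at x) \<Longrightarrow>
   Dop (\<lambda>x. f x - g x) x = Dop f x - Dop g x"
  by (intro Dop_at derivative_intros Dop_works)

lemma Dop_cmult: "f differentiable (at x) \<Longrightarrow> Dop (\<lambda>x. c * f x) x = c * Dop f x"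
  by (intro Dop_at derivative_intros Dop_works)

lemma Dop_mult: "f differentiable (at x) \<Longrightarrow> g differentiable (at x) \<Longrightarrow>
   Dop (\<lambda>x. f x * g x) x = f x * Dop g x + Dop f x * g x"
  by (intro Dop_at derivative_intros Dop_works)

lemma Dop_const: "Dop (\<lambda>x. c) x = 0"
  by (intro Dop_at derivative_intros)

lemma Dop_const_fun: "Dop (\<lambda>x. c) = (\<lambda>x. 0)"
  by (simp add: fun_eq_iff Dop_const)

lemma Dk_const: "(Dop ^^ Suc k) (\<lambda>x. c) = (\<lambda>x. 0)"
proof (induction k arbitrary: c)
  case 0 then show ?case by (simp add: Dop_const_fun)
next
  case (Suc k) then show ?case by (simp only: funpow_Dop_Suc[of "Suc k"] Dop_const_fun)
qed

lemma smooth_const: "smooth_fun (\<lambda>x. c)"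
  unfolding smooth_fun_def
proof (intro allI)
  fix k x show "(Dop ^^ k) (\<lambda>x. c) differentiable at x"
    by (cases k) (auto simp: Dk_const simp del: funpow.simps)
qed

lemma Dk_add_aux: "\<forall>f g. smooth_fun f \<longrightarrow> smooth_fun g \<longrightarrow>
   (Dop ^^ k) (\<lambda>x. f x + g x) = (\<lambda>x. (Dop ^^ k) f x + (Dop ^^ k) g x)"
proof (induction k)
  case 0 then show ?case by simp
next
  case (Suc k)
  show ?case
  proof (intro allI impI)
    fix f g :: "real \<Rightarrow> complex" assume f: "smooth_fun f" and g: "smooth_fun g"
    have "Dop (\<lambda>x. f x + g x) = (\<lambda>x. Dop f x + Dop g x)"
      using f g by (auto simp: fun_eq_iff Dop_add smooth_diff)
    then show "(Dop ^^ Suc k) (\<lambda>x. f x + g x) = (\<lambda>x. (Dop ^^ Suc k) f x + (Dop ^^ Suc k) g x)"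
      using Suc f g smooth_Dop by (simp only: funpow_Dop_Suc)
  qed
qed

lemma Dk_add: "smooth_fun f \<Longrightarrow> smooth_fun g \<Longrightarrow>
   (Dop ^^ k) (\<lambda>x. f x + g x) = (\<lambda>x. (Dop ^^ k) f x + (Dop ^^ k) g x)"
  using Dk_add_aux by blast

lemma smooth_add: "smooth_fun f \<Longrightarrow> smooth_fun g \<Longrightarrow> smooth_fun (\<lambda>x. f x + g x)"
  unfolding smooth_fun_def[of "\<lambda>x. f x + g x"]
  by (simp add: Dk_add smooth_Dk_diff differentiable_add)

lemma Dk_cmult_aux: "\<forall>f. smooth_fun f \<longrightarrow>
   (Dop ^^ k) (\<lambda>x. c * f x) = (\<lambda>x. c * (Dop ^^ k) f x)"
proof (induction k)
  case 0 then show ?case by simp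
next
  case (Suc k)
  show ?case
  proof (intro allI impI)
    fix f :: "real \<Rightarrow> complex" assume f: "smooth_fun f"
    have "Dop (\<lambda>x. c * f x) = (\<lambda>x. c * Dop f x)"
      using f by (auto simp: fun_eq_iff Dop_cmult smooth_diff)
    then show "(Dop ^^ Suc k) (\<lambda>x. c * f x) = (\<lambda>x. c * (Dop ^^ Suc k) f x)"
      using Suc f smooth_Dop by (simp only: funpow_Dop_Suc)
  qed
qed

lemma Dk_cmult: "smooth_fun f \<Longrightarrow> (Dop ^^ k) (\<lambda>x. c * f x) = (\<lambda>x. c * (Dop ^^ k) f x)"
  using Dk_cmult_aux by blast

lemma smooth_cmult: "smooth_fun f \<Longrightarrow> smooth_fun (\<lambda>x. c * f x)"
  unfolding smooth_fun_def[of "\<lambda>x. c * f x"]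
  by (simp add: Dk_cmult smooth_Dk_diff differentiable_mult differentiable_const)

lemma smooth_diff_fun: "smooth_fun f \<Longrightarrow> smooth_fun g \<Longrightarrow> smooth_fun (\<lambda>x. f x - g x)"
  using smooth_add[of f "\<lambda>x. (-1) * g x"] smooth_cmult[of g "-1"] by simp

lemma Dk_diff: "smooth_fun f \<Longrightarrow> smooth_fun g \<Longrightarrow>
   (Dop ^^ k) (\<lambda>x. f x - g x) = (\<lambda>x. (Dop ^^ k) f x - (Dop ^^ k) g x)"
  using Dk_add[of f "\<lambda>x. (-1) * g x" k] smooth_cmult[of g "-1"] Dk_cmult[of g k "-1"] by simp

lemma smooth_sum: "finite I \<Longrightarrow> (\<And>i. i \<in> I \<Longrightarrow> smooth_fun (f i)) \<Longrightarrow> smooth_fun (\<lambda>x. \<Sum>i\<in>I. f i x)"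
  by (induction I rule: finite_induct) (auto simp: smooth_const smooth_add)

lemma Dk_sum: "finite I \<Longrightarrow> (\<And>i. i \<in> I \<Longrightarrow> smooth_fun (f i)) \<Longrightarrow>
   (Dop ^^ k) (\<lambda>x. \<Sum>i\<in>I. f i x) = (\<lambda>x. \<Sum>i\<in>I. (Dop ^^ k) (f i) x)"
proof (induction I rule: finite_induct)
  case empty then show ?case by (cases k) (auto simp: Dk_const simp del: funpow.simps)
next
  case (insert j I)
  then show ?case by (simp add: Dk_add smooth_sum)
qed


lemma Dop_sum: "finite I \<Longrightarrow> (\<And>i. i \<in> I \<Longrightarrow> h i differentiable (at x)) \<Longrightarrow>
   Dop (\<lambda>x. \<Sum>i\<in>I. h i x) x = (\<Sum>i\<in>I. Dop (h i) x)"
  by (intro Dop_at has_vector_derivative_sum Dop_works) auto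

lemma Suc_choose': "Suc n choose k = (n choose k) + (if k = 0 then 0 else (n choose (k-1)))"
  by (cases k) simp_all

lemma leibniz_sum_step:
  fixes F G :: "nat \<Rightarrow> complex"
  shows "(\<Sum>i\<le>k. of_nat (k choose i) * (F i * G (Suc (k - i)) + F (Suc i) * G (k - i)))
       = (\<Sum>i\<le>Suc k. of_nat (Suc k choose i) * F i * G (Suc k - i))"
proof -
  have A: "(\<Sum>i\<le>Suc k. of_nat (k choose i) * F i * G (Suc k - i))
        = (\<Sum>i\<le>k. of_nat (k choose i) * F i * G (Suc (k - i)))"
    by (simp add: Suc_diff_le)
  have B: "(\<Sum>i\<le>Suc k. of_nat (if i = 0 then 0 else (k choose (i-1))) * F i * G (Suc k - i))
        = (\<Sum>i\<le>k. of_nat (k choose i) * F (Suc i) * G (k - i))"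
    by (subst sum.atMost_Suc_shift) simp
  have "(\<Sum>i\<le>Suc k. of_nat (Suc k choose i) * F i * G (Suc k - i))
      = (\<Sum>i\<le>Suc k. of_nat (k choose i) * F i * G (Suc k - i))
        + (\<Sum>i\<le>Suc k. of_nat (if i = 0 then 0 else (k choose (i-1))) * F i * G (Suc k - i))"
    by (simp add: Suc_choose' sum.distrib[symmetric] algebra_simps del: binomial_Suc_Suc)
  also have "\<dots> = (\<Sum>i\<le>k. of_nat (k choose i) * (F i * G (Suc (k - i)) + F (Suc i) * G (k - i)))"
    unfolding A B by (simp add: sum.distrib[symmetric] algebra_simps)
  finally show ?thesis by simp
qed

lemma leibniz:
  assumes f: "smooth_fun f" and g: "smooth_fun g"
  shows "(Dop ^^ k) (\<lambda>x. f x * g x) = (\<lambda>x. \<Sum>i\<le>k. of_nat (k choose i) * (Dop ^^ i) f x * (Dop ^^ (k - i)) g x)"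
proof (induction k)
  case 0 then show ?case by simp
next
  case (Suc k)
  have "(Dop ^^ Suc k) (\<lambda>x. f x * g x) = Dop ((Dop ^^ k) (\<lambda>x. f x * g x))" by simp
  also have "\<dots> = Dop (\<lambda>x. \<Sum>i\<le>k. of_nat (k choose i) * (Dop ^^ i) f x * (Dop ^^ (k - i)) g x)"
    using Suc by simp
  also have "\<dots> = (\<lambda>x. \<Sum>i\<le>Suc k. of_nat (Suc k choose i) * (Dop ^^ i) f x * (Dop ^^ (Suc k - i)) g x)"
  proof
    fix x
    have d: "\<And>i j. (\<lambda>x. of_nat (k choose i) * (Dop ^^ i) f x * (Dop ^^ j) g x) differentiable (at x)"
      using f g by (intro differentiable_mult differentiable_const smooth_Dk_diff)
    have e: "\<And>i j. Dop (\<lambda>x. of_nat (k choose i) * (Dop ^^ i) f x * (Dop ^^ j) g x) x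
        = of_nat (k choose i) * ((Dop ^^ i) f x * (Dop ^^ Suc j) g x + (Dop ^^ Suc i) f x * (Dop ^^ j) g x)"
      using f g by (intro Dop_at) (auto intro!: derivative_eq_intros smooth_Dk_hasder simp: algebra_simps)
    have "Dop (\<lambda>x. \<Sum>i\<le>k. of_nat (k choose i) * (Dop ^^ i) f x * (Dop ^^ (k - i)) g x) x
       = (\<Sum>i\<le>k. of_nat (k choose i) * ((Dop ^^ i) f x * (Dop ^^ Suc (k - i)) g x + (Dop ^^ Suc i) f x * (Dop ^^ (k - i)) g x))"
      by (subst Dop_sum) (auto simp: d e)
    also have "\<dots> = (\<Sum>i\<le>Suc k. of_nat (Suc k choose i) * (Dop ^^ i) f x * (Dop ^^ (Suc k - i)) g x)"
      using leibniz_sum_step[of k "\<lambda>i. (Dop ^^ i) f x" "\<lambda>i. (Dop ^^ i) g x"] by simp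
    finally show "Dop (\<lambda>x. \<Sum>i\<le>k. of_nat (k choose i) * (Dop ^^ i) f x * (Dop ^^ (k - i)) g x) x = 
      (\<Sum>i\<le>Suc k. of_nat (Suc k choose i) * (Dop ^^ i) f x * (Dop ^^ (Suc k - i)) g x)" .
  qed
  finally show ?case .
qed

lemma smooth_mult: "smooth_fun f \<Longrightarrow> smooth_fun g \<Longrightarrow> smooth_fun (\<lambda>x. f x * g x)"
  unfolding smooth_fun_def[of "\<lambda>x. f x * g x"]
  by (simp add: leibniz del: funpow.simps)
     (intro allI differentiable_sum ballI differentiable_mult differentiable_const smooth_Dk_diff; simp)

lemma mult_ord:
  assumes "smooth_fun w" "smooth_fun f" "\<forall>l<i. (Dop ^^ l) f a = 0"
  shows "\<forall>l<i. (Dop ^^ l) (\<lambda>x. w x * f x) a = 0"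
proof (intro allI impI)
  fix l assume l: "l < i"
  have "(Dop ^^ l) (\<lambda>x. w x * f x) a = (\<Sum>j\<le>l. of_nat (l choose j) * (Dop ^^ j) w a * (Dop ^^ (l - j)) f a)"
    using assms by (simp add: leibniz)
  also have "\<dots> = 0" using assms(3) l by (intro sum.neutral) auto
  finally show "(Dop ^^ l) (\<lambda>x. w x * f x) a = 0" .
qed

lemma mult_ord':
  assumes "smooth_fun w" "smooth_fun f" "\<forall>l<i. (Dop ^^ l) f a = 0"
  shows "\<forall>l<i. (Dop ^^ l) (\<lambda>x. f x * w x) a = 0"
  using mult_ord[OF assms] by (simp add: mult.commute)

lemma div_ord:
  assumes "smooth_fun w" "smooth_fun f" "w a \<noteq> 0" "\<forall>l<i. (Dop ^^ l) (\<lambda>x. w x * f x) a = 0"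
  shows "\<forall>l<i. (Dop ^^ l) f a = 0"
proof -
  have "(Dop ^^ l) f a = 0" if "l < i" for l
    using that
  proof (induction l rule: less_induct)
    case (less l)
    have "0 = (Dop ^^ l) (\<lambda>x. w x * f x) a" using assms(4) less by simp
    also have "\<dots> = (\<Sum>j\<le>l. of_nat (l choose j) * (Dop ^^ j) w a * (Dop ^^ (l - j)) f a)"
      using assms by (simp add: leibniz)
    also have "\<dots> = w a * (Dop ^^ l) f a"
      using less.prems by (subst sum.atMost_shift) (auto intro!: sum.neutral less.IH)
    finally show ?case using assms(3) by simp
  qed
  then show ?thesis by blast
qed


definition ex :: "complex \<Rightarrow> real \<Rightarrow> complex" where
  "ex c = (\<lambda>x. exp (c * of_real x))"

lemma ex_hasder: "(ex c has_vector_derivative c * ex c x) (at x)"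
  unfolding ex_def
  by (auto intro!: derivative_eq_intros has_vector_derivative_real_field simp: algebra_simps)

lemma Dop_ex: "Dop (ex c) = (\<lambda>x. c * ex c x)"
  using ex_hasder Dop_at by blast

lemma Dk_ex: "(Dop ^^ k) (ex c) = (\<lambda>x. c ^ k * ex c x)"
proof (induction k)
  case 0 then show ?case by simp
next
  case (Suc k)
  have "Dop (\<lambda>x. c ^ k * ex c x) = (\<lambda>x. c ^ k * (c * ex c x))"
    by (intro ext Dop_at derivative_intros ex_hasder)
  then show ?case using Suc by (simp add: algebra_simps)
qed

lemma ex_diff: "ex c differentiable (at x)"
  using ex_hasder by (rule differentiableI_vector)

lemma smooth_ex: "smooth_fun (ex c)"
  unfolding smooth_fun_def Dk_ex
  by (intro allI differentiable_mult differentiable_const ex_diff)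

lemma ex_nonzero: "ex c x \<noteq> 0" by (simp add: ex_def)

lemma ex_add: "ex c x * ex d x = ex (c + d) x"
  by (simp add: ex_def exp_add[symmetric] algebra_simps)

lemma ex_0: "ex 0 x = 1" by (simp add: ex_def)

lemma ex_neg: "ex (-c) x * ex c x = 1"
  by (simp add: ex_add ex_0)

lemma ex_real: assumes "Im c = 0" shows "ex c x = of_real (exp (Re c * x))"
proof -
  have "c = of_real (Re c)" using assms by (simp add: complex_eq_iff)
  then have "c * of_real x = of_real (Re c * x)" by (metis of_real_mult)
  then have "ex c x = exp (of_real (Re c * x))" unfolding ex_def by (simp only:)
  also have "\<dots> = of_real (exp (Re c * x))" by (rule exp_of_real)
  finally show ?thesis .
qed

lemma idf_hasder: "((\<lambda>x. complex_of_real x) has_vector_derivative 1) (at x)"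
  by (auto intro!: derivative_eq_intros)

lemma Dop_idf: "Dop (\<lambda>x. complex_of_real x) = (\<lambda>x. 1)"
  using idf_hasder Dop_at by blast

lemma smooth_idf: "smooth_fun (\<lambda>x. complex_of_real x)"
  unfolding smooth_fun_def
proof (intro allI)
  fix k x
  show "(Dop ^^ k) (\<lambda>x. complex_of_real x) differentiable at x"
  proof (cases k)
    case 0 then show ?thesis using idf_hasder by (auto simp: differentiable_def has_vector_derivative_def)
  next
    case (Suc m)
    then have "(Dop ^^ k) (\<lambda>x. complex_of_real x) = (Dop ^^ m) (\<lambda>x. 1)"
      by (simp only: funpow_Dop_Suc Dop_idf)
    then show ?thesis using smooth_const smooth_Dk_diff by metis
  qed
qed

lemma Dop_cnj: "f differentiable (at x) \<Longrightarrow> Dop (\<lambda>x. cnj (f x)) x = cnj (Dop f x)"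
  by (intro Dop_at has_vector_derivative_cnj Dop_works)

lemma Dk_cnj_aux: "\<forall>f. smooth_fun f \<longrightarrow> (Dop ^^ k) (\<lambda>x. cnj (f x)) = (\<lambda>x. cnj ((Dop ^^ k) f x))"
proof (induction k)
  case 0 then show ?case by simp
next
  case (Suc k)
  show ?case
  proof (intro allI impI)
    fix f :: "real \<Rightarrow> complex" assume f: "smooth_fun f"
    have "Dop (\<lambda>x. cnj (f x)) = (\<lambda>x. cnj (Dop f x))"
      using f by (auto simp: fun_eq_iff Dop_cnj smooth_diff)
    then show "(Dop ^^ Suc k) (\<lambda>x. cnj (f x)) = (\<lambda>x. cnj ((Dop ^^ Suc k) f x))"
      using Suc f smooth_Dop by (simp only: funpow_Dop_Suc)
  qed
qed

lemma Dk_cnj: "smooth_fun f \<Longrightarrow> (Dop ^^ k) (\<lambda>x. cnj (f x)) = (\<lambda>x. cnj ((Dop ^^ k) f x))"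
  using Dk_cnj_aux by blast

lemma smooth_cnj: assumes "smooth_fun f" shows "smooth_fun (\<lambda>x. cnj (f x))"
  unfolding smooth_fun_def Dk_cnj[OF assms]
  using has_vector_derivative_cnj[OF Dop_works[OF smooth_Dk_diff[OF assms]]]
  by (blast intro: differentiableI_vector)

definition realf :: "(real \<Rightarrow> complex) \<Rightarrow> bool" where
  "realf f \<longleftrightarrow> (\<forall>x. Im (f x) = 0)"

lemma realf_cnj: "realf f \<longleftrightarrow> (\<lambda>x. cnj (f x)) = f"
  unfolding realf_def by (auto simp: fun_eq_iff complex_eq_iff)

lemma realf_Dk: assumes "smooth_fun f" "realf f" shows "realf ((Dop ^^ k) f)"
proof -
  have e: "(\<lambda>x. cnj (f x)) = f" using assms(2) realf_cnj by blast
  have "(Dop ^^ k) (\<lambda>x. cnj (f x)) = (\<lambda>x. cnj ((Dop ^^ k) f x))" using Dk_cnj[OF assms(1)] .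
  then have "(Dop ^^ k) f = (\<lambda>x. cnj ((Dop ^^ k) f x))" unfolding e .
  then show ?thesis using realf_cnj by metis
qed

lemma realf_Dop: "smooth_fun f \<Longrightarrow> realf f \<Longrightarrow> realf (Dop f)"
  using realf_Dk[of f 1] by simp

lemma realf_deriv: "f differentiable (at x) \<Longrightarrow>
  ((\<lambda>x. Re (f x)) has_real_derivative Re (Dop f x)) (at x)"
  unfolding has_real_derivative_iff_has_vector_derivative
  by (rule bounded_linear.has_vector_derivative[OF bounded_linear_Re Dop_works])

lemma realf_eq: "realf f \<Longrightarrow> f x = of_real (Re (f x))"
  by (simp add: realf_def complex_eq_iff)

lemma zero_on_Dop:
  assumes "smooth_fun g" "a < b" "\<forall>x\<in>{a..b}. g x = 0"
  shows "\<forall>x\<in>{a..b}. Dop g x = 0"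
proof -
  have int: "Dop g x = 0" if "x \<in> {a<..<b}" for x
  proof -
    have "((\<lambda>x. 0) has_vector_derivative 0) (at x)" by (rule derivative_intros)
    then have "(g has_vector_derivative 0) (at x)"
      by (rule has_vector_derivative_transform_within_open[of _ _ _ "{a<..<b}"]) (use that assms in auto)
    then show ?thesis by (rule Dop_at)
  qed
  have "continuous_on (closure {a<..<b}) (Dop g)"
    using smooth_cont[OF smooth_Dop[OF assms(1)]] by blast
  then show ?thesis using continuous_constant_on_closure[of "{a<..<b}" "Dop g" 0] int assms(2)
    by auto
qed

lemma zero_on_Dk:
  assumes "smooth_fun g" "a < b" "\<forall>x\<in>{a..b}. g x = 0"
  shows "\<forall>x\<in>{a..b}. (Dop ^^ k) g x = 0"
proof (induction k)
  case 0 then show ?case using assms by simp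
next
  case (Suc k) then show ?case using zero_on_Dop[OF smooth_Dk[OF assms(1)] assms(2)] by simp
qed

definition T :: "complex \<Rightarrow> (real \<Rightarrow> complex) \<Rightarrow> real \<Rightarrow> complex" where
  "T l f = (\<lambda>x. Dop f x - l * f x)"

lemma smooth_T: "smooth_fun f \<Longrightarrow> smooth_fun (T l f)"
  unfolding T_def by (intro smooth_diff_fun smooth_Dop smooth_cmult)

lemma smooth_diffop: "smooth_fun f \<Longrightarrow> smooth_fun (diffop ls f)"
  by (induction ls) (auto intro: smooth_T[unfolded T_def])

lemma diffop_Cons_T: "diffop (l # ls) f = T l (diffop ls f)"
  by (simp add: T_def)

declare diffop.simps(2)[simp del]

lemma Dk_T: "smooth_fun f \<Longrightarrow> (Dop ^^ k) (T l f) = (\<lambda>x. (Dop ^^ Suc k) f x - l * (Dop ^^ k) f x)"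
  unfolding T_def by (simp add: Dk_diff smooth_Dop smooth_cmult Dk_cmult funpow_Dop_Suc del: funpow.simps)

lemma T_T: assumes "smooth_fun f"
  shows "T l (T m f) = (\<lambda>x. Dop (Dop f) x - (l + m) * Dop f x + l * m * f x)"
proof
  fix x
  have d1: "Dop f differentiable (at x)" using smooth_diff[OF smooth_Dop[OF assms]] .
  have d2: "f differentiable (at x)" using smooth_diff[OF assms] .
  have d3: "(\<lambda>x. m * f x) differentiable (at x)" using d2 by (intro differentiable_mult differentiable_const)
  have "Dop (\<lambda>x. Dop f x - m * f x) x = Dop (Dop f) x - m * Dop f x"
    using Dop_diff[OF d1 d3] Dop_cmult[OF d2] by simp
  then show "T l (T m f) x = Dop (Dop f) x - (l + m) * Dop f x + l * m * f x"
    unfolding T_def by (simp add: algebra_simps)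
qed

lemma T_comm: "smooth_fun f \<Longrightarrow> T l (T m f) = T m (T l f)"
  by (simp add: T_T algebra_simps)

lemma T_diffop: "smooth_fun f \<Longrightarrow> diffop ls (T l f) = T l (diffop ls f)"
proof (induction ls)
  case Nil then show ?case by simp
next
  case (Cons m ls)
  then show ?case by (simp add: diffop_Cons_T T_comm smooth_diffop)
qed

lemma diffop_Cons': "smooth_fun f \<Longrightarrow> diffop (l # ls) f = diffop ls (T l f)"
  by (simp add: diffop_Cons_T T_diffop)

lemma diffop_remove1: "l \<in> set ys \<Longrightarrow> smooth_fun f \<Longrightarrow> diffop ys f = diffop (remove1 l ys) (T l f)"
proof (induction ys)
  case Nil then show ?case by simp
next
  case (Cons m ys)
  show ?case
  proof (cases "m = l")
    case True then show ?thesis using Cons by (simp add: diffop_Cons')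
  next
    case False
    then have "l \<in> set ys" using Cons by simp
    then show ?thesis using Cons False by (simp add: diffop_Cons_T T_diffop)
  qed
qed

lemma diffop_zero: "diffop ls (\<lambda>x. 0) = (\<lambda>x. 0)"
  by (induction ls) (auto simp: diffop_Cons_T T_def Dop_const_fun)

lemma diffop_add: "smooth_fun f \<Longrightarrow> smooth_fun g \<Longrightarrow> diffop ls (\<lambda>x. f x + g x) = (\<lambda>x. diffop ls f x + diffop ls g x)"
proof (induction ls)
  case Nil then show ?case by simp
next
  case (Cons l ls)
  have IH: "diffop ls (\<lambda>x. f x + g x) = (\<lambda>x. diffop ls f x + diffop ls g x)" using Cons by simp
  show ?case unfolding diffop_Cons_T IH T_def
    using Cons.prems by (intro ext) (simp add: Dop_add smooth_diff smooth_diffop algebra_simps)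
qed

lemma diffop_cmult: "smooth_fun f \<Longrightarrow> diffop ls (\<lambda>x. c * f x) = (\<lambda>x. c * diffop ls f x)"
proof (induction ls)
  case Nil then show ?case by simp
next
  case (Cons l ls)
  have IH: "diffop ls (\<lambda>x. c * f x) = (\<lambda>x. c * diffop ls f x)" using Cons by simp
  show ?case unfolding diffop_Cons_T IH T_def
    using Cons.prems by (intro ext) (simp add: Dop_cmult smooth_diff smooth_diffop algebra_simps)
qed

lemma diffop_cnj: "smooth_fun f \<Longrightarrow> diffop (map cnj ls) (\<lambda>x. cnj (f x)) = (\<lambda>x. cnj (diffop ls f x))"
proof (induction ls)
  case Nil then show ?case by simp
next
  case (Cons l ls)
  have IH: "diffop (map cnj ls) (\<lambda>x. cnj (f x)) = (\<lambda>x. cnj (diffop ls f x))" using Cons by simp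
  show ?case unfolding list.map diffop_Cons_T IH T_def
    using Cons.prems by (intro ext) (simp add: Dop_cnj smooth_diff smooth_diffop algebra_simps)
qed

definition ESp :: "complex list \<Rightarrow> (real \<Rightarrow> complex) set" where
  "ESp L = {f. smooth_fun f \<and> (\<forall>x. diffop L f x = 0)}"

lemma ESpace_ESp: "ESpace lam n = ESp (map lam [0..<Suc n])"
  by (simp add: ESpace_def ESp_def)

lemma ESp_smooth: "f \<in> ESp L \<Longrightarrow> smooth_fun f"
  by (simp add: ESp_def)

lemma ESp_remove1: "l \<in> set L \<Longrightarrow> f \<in> ESp L \<longleftrightarrow> smooth_fun f \<and> T l f \<in> ESp (remove1 l L)"
  unfolding ESp_def using diffop_remove1 smooth_T by auto

lemma ESp_Cons: "f \<in> ESp (l # L) \<longleftrightarrow> smooth_fun f \<and> T l f \<in> ESp L"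
  using ESp_remove1[of l "l # L"] by simp

lemma ESp_zero: "(\<lambda>x. 0) \<in> ESp L"
  by (simp add: ESp_def diffop_zero smooth_const)

lemma ESp_add: "f \<in> ESp L \<Longrightarrow> g \<in> ESp L \<Longrightarrow> (\<lambda>x. f x + g x) \<in> ESp L"
  by (simp add: ESp_def diffop_add smooth_add)

lemma ESp_cmult: "f \<in> ESp L \<Longrightarrow> (\<lambda>x. c * f x) \<in> ESp L"
  by (simp add: ESp_def diffop_cmult smooth_cmult)

lemma ESp_diff: "f \<in> ESp L \<Longrightarrow> g \<in> ESp L \<Longrightarrow> (\<lambda>x. f x - g x) \<in> ESp L"
  using ESp_add[of f L "\<lambda>x. (-1) * g x"] ESp_cmult[of g L "-1"] by simp

lemma ESp_sum: "finite I \<Longrightarrow> (\<And>i. i \<in> I \<Longrightarrow> f i \<in> ESp L) \<Longrightarrow> (\<lambda>x. \<Sum>i\<in>I. f i x) \<in> ESp L"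
  by (induction I rule: finite_induct) (auto simp: ESp_zero ESp_add)

lemma ESp_Nil: "f \<in> ESp [] \<longleftrightarrow> f = (\<lambda>x. 0)"
proof
  assume "f \<in> ESp []" then show "f = (\<lambda>x. 0)" by (auto simp: ESp_def fun_eq_iff)
next
  assume "f = (\<lambda>x. 0)" then show "f \<in> ESp []" by (simp add: ESp_zero)
qed

lemma T_ex: "T l (ex c) = (\<lambda>x. (c - l) * ex c x)"
  by (simp add: T_def Dop_ex algebra_simps)

lemma diffop_ex: "diffop ls (ex c) = (\<lambda>x. (\<Prod>l\<leftarrow>ls. c - l) * ex c x)"
proof (induction ls)
  case Nil then show ?case by simp
next
  case (Cons l ls)
  have "Dop (\<lambda>x. (\<Prod>l\<leftarrow>ls. c - l) * ex c x) = (\<lambda>x. (\<Prod>l\<leftarrow>ls. c - l) * (c * ex c x))"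
    by (intro ext Dop_at derivative_intros ex_hasder)
  then show ?case unfolding diffop_Cons_T Cons T_def by (simp add: algebra_simps)
qed

lemma ex_in_ESp: "l \<in> set L \<Longrightarrow> ex l \<in> ESp L"
  by (simp add: ESp_remove1 smooth_ex T_ex ESp_zero)

lemma ex_in_ESp_iff: "ex c \<in> ESp L \<longleftrightarrow> c \<in> set L"
proof
  assume "ex c \<in> ESp L"
  then have "diffop L (ex c) 0 = 0" by (simp add: ESp_def)
  then have "(\<Prod>l\<leftarrow>L. c - l) * ex c 0 = 0" by (simp only: diffop_ex)
  then have "(\<Prod>l\<leftarrow>L. c - l) = 0" by (simp add: ex_nonzero)
  then show "c \<in> set L" by (auto simp: prod_list_zero_iff)
qed (rule ex_in_ESp)

definition xex :: "complex \<Rightarrow> real \<Rightarrow> complex" where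
  "xex c = (\<lambda>x. of_real x * ex c x)"

lemma smooth_xex: "smooth_fun (xex c)"
  unfolding xex_def by (intro smooth_mult smooth_idf smooth_ex)

lemma T_xex: "T c (xex c) = ex c"
proof -
  have "Dop (xex c) x = ex c x + of_real x * (c * ex c x)" for x
    unfolding xex_def by (intro Dop_at) (auto intro!: derivative_eq_intros ex_hasder simp: algebra_simps)
  then show ?thesis by (simp add: T_def fun_eq_iff xex_def algebra_simps)
qed

lemma xex_in_ESp: "L = c # c # L' \<Longrightarrow> xex c \<in> ESp L"
  using ESp_Cons[of "xex c" c "c # L'"] ex_in_ESp[of c "c # L'"] by (simp add: smooth_xex T_xex)


lemma antideriv:
  fixes g :: "real \<Rightarrow> complex"
  assumes "\<And>x. isCont g x"
  shows "\<exists>F. \<forall>x. (F has_vector_derivative g x) (at x)"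
  using einterval_antiderivative[of "-\<infinity>" "\<infinity>" g] assms by auto

lemma zero_deriv_const:
  assumes "\<And>x. (h has_vector_derivative 0) (at x)"
  shows "h x = h y"
proof -
  have "\<exists>c. \<forall>x\<in>UNIV. h x = c"
    by (rule has_derivative_zero_constant) (use assms in \<open>auto simp: has_vector_derivative_def\<close>)
  then show ?thesis by auto
qed

lemma zero_deriv_const_on:
  fixes h :: "real \<Rightarrow> complex"
  assumes "\<And>x. x \<in> {a..b} \<Longrightarrow> (h has_vector_derivative 0) (at x)" "x \<in> {a..b}" "y \<in> {a..b}"
  shows "h x = h y"
proof -
  have "\<exists>c. \<forall>x\<in>{a..b}. h x = c"
    by (rule has_derivative_zero_constant)
       (use assms in \<open>auto simp: has_vector_derivative_def intro: has_derivative_at_withinI\<close>)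
  then show ?thesis using assms by auto
qed

lemma ex_mult_T:
  assumes "smooth_fun f"
  shows "((\<lambda>x. ex (-l) x * f x) has_vector_derivative ex (-l) x * T l f x) (at x)"
proof -
  have "((\<lambda>x. ex (-l) x * f x) has_vector_derivative ex (-l) x * Dop f x + (-l) * ex (-l) x * f x) (at x)"
    by (rule has_vector_derivative_mult[OF ex_hasder Dop_works[OF smooth_diff[OF assms]]])
  then show ?thesis by (simp add: T_def algebra_simps)
qed

lemma T_zero_imp:
  assumes "smooth_fun f" "T l f = (\<lambda>x. 0)"
  shows "f x = ex l x * ex (-l) a * f a"
proof -
  have "(\<lambda>x. ex (-l) x * f x) x = (\<lambda>x. ex (-l) x * f x) a"
    by (rule zero_deriv_const) (use ex_mult_T[OF assms(1), of l] assms(2) in auto)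
  then have e: "ex (-l) x * f x = ex (-l) a * f a" by simp
  have "f x = (ex (-l) x * ex l x) * f x" using ex_neg[of l x] by simp
  also have "\<dots> = ex l x * (ex (-l) x * f x)" by (simp only: ac_simps)
  also have "\<dots> = ex l x * ex (-l) a * f a" unfolding e by (simp only: ac_simps)
  finally show ?thesis .
qed

lemma ode_uniq:
  "f \<in> ESp L \<Longrightarrow> (\<forall>i<length L. (Dop ^^ i) f a = 0) \<Longrightarrow> f = (\<lambda>x. 0)"
proof (induction L arbitrary: f)
  case Nil then show ?case by (simp add: ESp_Nil)
next
  case (Cons l L)
  have sf: "smooth_fun f" and g: "T l f \<in> ESp L" using Cons.prems ESp_Cons by auto
  have "\<forall>i<length L. (Dop ^^ i) (T l f) a = 0"
    using Cons.prems(2) by (simp add: Dk_T sf del: funpow.simps)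
  then have "T l f = (\<lambda>x. 0)" using Cons.IH g by blast
  then have "f x = ex l x * ex (-l) a * f a" for x using T_zero_imp sf by blast
  moreover have "f a = 0" using Cons.prems(2) by (metis funpow_0 length_Cons zero_less_Suc)
  ultimately show ?case by auto
qed

lemma smooth_from_ode:
  assumes "\<And>x. f differentiable (at x)" "smooth_fun g" "Dop f = (\<lambda>x. l * f x + g x)"
  shows "smooth_fun f"
proof -
  have "(\<forall>x. (Dop ^^ k) f differentiable (at x)) \<and> (Dop ^^ Suc k) f = (\<lambda>x. l * (Dop ^^ k) f x + (Dop ^^ k) g x)" for k
  proof (induction k)
    case 0 then show ?case using assms by simp
  next
    case (Suc k)
    have e: "(Dop ^^ Suc k) f = (\<lambda>x. l * (Dop ^^ k) f x + (Dop ^^ k) g x)" using Suc.IH by blast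
    have d1: "(Dop ^^ Suc k) f differentiable (at x)" for x
      unfolding e using Suc.IH smooth_Dk_diff[OF assms(2)] by (auto intro!: differentiable_add differentiable_mult differentiable_const)
    have "(Dop ^^ Suc (Suc k)) f = Dop (\<lambda>x. l * (Dop ^^ k) f x + (Dop ^^ k) g x)"
      by (subst funpow.simps(2)) (simp only: o_apply e)
    also have "\<dots> = (\<lambda>x. l * (Dop ^^ Suc k) f x + (Dop ^^ Suc k) g x)"
    proof
      fix x
      have d1: "(\<lambda>x. l * (Dop ^^ k) f x) differentiable (at x)"
        using Suc by (intro differentiable_mult differentiable_const) auto
      show "Dop (\<lambda>x. l * (Dop ^^ k) f x + (Dop ^^ k) g x) x = l * (Dop ^^ Suc k) f x + (Dop ^^ Suc k) g x"
        using Dop_add[OF d1 smooth_Dk_diff[OF assms(2)]] Dop_cmult[of "(Dop ^^ k) f" x l] Suc by simp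
    qed
    finally show ?case using d1 by blast
  qed
  then show ?thesis unfolding smooth_fun_def by blast
qed

lemma solve_T:
  assumes "smooth_fun g"
  shows "\<exists>f. smooth_fun f \<and> T l f = g \<and> f a = c"
proof -
  have "\<And>x. isCont (\<lambda>x. ex (-l) x * g x) x"
    using differentiable_imp_continuous_within[OF smooth_diff[OF smooth_mult[OF smooth_ex assms]]] by simp
  then obtain F where F: "\<And>x. (F has_vector_derivative ex (-l) x * g x) (at x)"
    using antideriv by blast
  define C where "C = c * ex (-l) a - F a"
  define f where "f = (\<lambda>x. ex l x * (F x + C))"
  have fd: "(f has_vector_derivative l * f x + g x) (at x)" for x
  proof -
    have "(f has_vector_derivative ex l x * (ex (-l) x * g x + 0) + l * ex l x * (F x + C)) (at x)"
      unfolding f_def by (rule has_vector_derivative_mult[OF ex_hasder has_vector_derivative_add[OF F has_vector_derivative_const]])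
    then show ?thesis using ex_neg[of l x] by (simp add: f_def algebra_simps)
  qed
  then have Df: "Dop f = (\<lambda>x. l * f x + g x)" using Dop_at by blast
  have sf: "smooth_fun f"
    by (rule smooth_from_ode[OF _ assms Df]) (use fd differentiableI_vector in blast)
  have "T l f = g" by (simp add: T_def Df)
  moreover have "f a = c" using ex_neg[of l a] by (simp add: f_def C_def algebra_simps)
  ultimately show ?thesis using sf by blast
qed

lemma ode_exist: "\<exists>f\<in>ESp L. \<forall>i<length L. (Dop ^^ i) f a = v i"
proof (induction L arbitrary: v)
  case Nil then show ?case using ESp_zero by auto
next
  case (Cons l L)
  obtain g where g: "g \<in> ESp L" and gv: "\<forall>i<length L. (Dop ^^ i) g a = v (Suc i) - l * v i"
    using Cons.IH[of "\<lambda>i. v (Suc i) - l * v i"] by blast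
  obtain f where sf: "smooth_fun f" and Tf: "T l f = g" and fa: "f a = v 0"
    using solve_T[OF ESp_smooth[OF g]] by blast
  have fE: "f \<in> ESp (l # L)" using sf Tf g ESp_Cons by blast
  have Df: "Dop f = (\<lambda>x. g x + l * f x)"
  proof
    fix x have "Dop f x - l * f x = g x" using Tf by (simp add: T_def fun_eq_iff)
    then show "Dop f x = g x + l * f x" by (simp add: diff_eq_eq)
  qed
  have "(Dop ^^ i) f a = v i" if "i \<le> length L" for i
    using that
  proof (induction i)
    case 0 then show ?case using fa by simp
  next
    case (Suc i)
    have "(Dop ^^ Suc i) f = (Dop ^^ i) (\<lambda>x. g x + l * f x)" by (simp only: funpow_Dop_Suc Df)
    also have "\<dots> = (\<lambda>x. (Dop ^^ i) g x + l * (Dop ^^ i) f x)"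
      using sf ESp_smooth[OF g] by (simp add: Dk_add smooth_cmult Dk_cmult)
    finally show ?case using Suc gv by simp
  qed
  then have "\<forall>i<length (l # L). (Dop ^^ i) f a = v i" by (simp add: less_Suc_eq_le)
  then show ?case using fE by blast
qed

lemma T_surj:
  assumes "l \<in> set L" "g \<in> ESp (remove1 l L)"
  shows "\<exists>f\<in>ESp L. T l f = g"
proof -
  obtain f where "smooth_fun f" "T l f = g" using solve_T[OF ESp_smooth[OF assms(2)]] by blast
  then have "f \<in> ESp L" using ESp_remove1[OF assms(1), of f] assms(2) by simp
  then show ?thesis using \<open>T l f = g\<close> by blast
qed

definition cc :: "complex list \<Rightarrow> bool" where
  "cc L \<longleftrightarrow> (\<forall>f\<in>ESp L. (\<lambda>x. cnj (f x)) \<in> ESp L)"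

lemma T_cnj: "smooth_fun h \<Longrightarrow> T (cnj m) (\<lambda>x. cnj (h x)) = (\<lambda>x. cnj (T m h x))"
  by (simp add: T_def fun_eq_iff Dop_cnj smooth_diff)

lemma cc_remove_real:
  assumes "cc L" "l \<in> set L" "Im l = 0"
  shows "cc (remove1 l L)"
  unfolding cc_def
proof
  fix g assume g: "g \<in> ESp (remove1 l L)"
  obtain f where f: "f \<in> ESp L" "T l f = g" using T_surj[OF assms(2) g] by blast
  have cf: "(\<lambda>x. cnj (f x)) \<in> ESp L" using assms(1) f by (simp add: cc_def)
  have "cnj l = l" using assms(3) by (simp add: complex_eq_iff)
  then have "T l (\<lambda>x. cnj (f x)) = (\<lambda>x. cnj (g x))"
    using T_cnj[OF ESp_smooth[OF f(1)], of l] f(2) by simp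
  then show "(\<lambda>x. cnj (g x)) \<in> ESp (remove1 l L)"
    using cf ESp_remove1[OF assms(2)] by metis
qed

lemma ex_cnj: "(\<lambda>x. cnj (ex c x)) = ex (cnj c)"
  by (simp add: ex_def fun_eq_iff exp_cnj)

lemma cc_conj_mem:
  assumes "cc L" "m \<in> set L"
  shows "cnj m \<in> set L"
  using assms ex_in_ESp[OF assms(2)] ex_in_ESp_iff[of "cnj m" L] ex_cnj
  unfolding cc_def by metis

lemma cc_remove_pair:
  assumes "cc L" "m \<in> set L" "cnj m \<in> set (remove1 m L)"
  shows "cc (remove1 (cnj m) (remove1 m L))"
  unfolding cc_def
proof
  fix g assume g: "g \<in> ESp (remove1 (cnj m) (remove1 m L))"
  obtain f1 where f1: "f1 \<in> ESp (remove1 m L)" "T (cnj m) f1 = g" using T_surj[OF assms(3) g] by blast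
  obtain f where f: "f \<in> ESp L" "T m f = f1" using T_surj[OF assms(2) f1(1)] by blast
  have sf: "smooth_fun f" using ESp_smooth[OF f(1)] .
  have cf: "(\<lambda>x. cnj (f x)) \<in> ESp L" using assms(1) f by (simp add: cc_def)
  then have "T m (\<lambda>x. cnj (f x)) \<in> ESp (remove1 m L)" using ESp_remove1[OF assms(2)] by blast
  then have h: "T (cnj m) (T m (\<lambda>x. cnj (f x))) \<in> ESp (remove1 (cnj m) (remove1 m L))"
    using ESp_remove1[OF assms(3)] by blast
  have "T (cnj m) (T m (\<lambda>x. cnj (f x))) = T m (T (cnj m) (\<lambda>x. cnj (f x)))"
    using T_comm smooth_cnj[OF sf] by metis
  also have "\<dots> = T m (\<lambda>x. cnj (T m f x))" using T_cnj[OF sf, of m] by simp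
  also have "\<dots> = (\<lambda>x. cnj (T (cnj m) (T m f) x))" using T_cnj[OF smooth_T[OF sf], of "cnj m"] by simp
  finally show "(\<lambda>x. cnj (g x)) \<in> ESp (remove1 (cnj m) (remove1 m L))" using h f f1 by simp
qed

lemma ReIm_decomp: "f x = of_real (Re (f x)) + \<i> * of_real (Im (f x))"
  by (simp add: complex_eq_iff)

lemma Re_in_ESp:
  assumes "cc L" "f \<in> ESp L"
  shows "(\<lambda>x. of_real (Re (f x))) \<in> ESp L"
proof -
  have "(\<lambda>x. (1/2) * (f x + cnj (f x))) \<in> ESp L"
    using assms by (intro ESp_cmult ESp_add) (auto simp: cc_def)
  moreover have "(\<lambda>x. (1/2) * (f x + cnj (f x))) = (\<lambda>x. of_real (Re (f x)))"
    by (simp add: fun_eq_iff complex_eq_iff)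
  ultimately show ?thesis by simp
qed

lemma Im_in_ESp:
  assumes "cc L" "f \<in> ESp L"
  shows "(\<lambda>x. of_real (Im (f x))) \<in> ESp L"
proof -
  have "(\<lambda>x. (-\<i>/2) * (f x - cnj (f x))) \<in> ESp L"
    using assms by (intro ESp_cmult ESp_diff) (auto simp: cc_def)
  moreover have "(\<lambda>x. (-\<i>/2) * (f x - cnj (f x))) = (\<lambda>x. of_real (Im (f x)))"
    by (simp add: fun_eq_iff complex_eq_iff)
  ultimately show ?thesis by simp
qed

lemma Dk_Re: "smooth_fun f \<Longrightarrow> (Dop ^^ k) (\<lambda>x. of_real (Re (f x))) = (\<lambda>x. of_real (Re ((Dop ^^ k) f x)))"
proof -
  assume sf: "smooth_fun f"
  have e: "(\<lambda>x. of_real (Re (f x))) = (\<lambda>x. (1/2) * (f x + cnj (f x)))"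
    by (simp add: fun_eq_iff complex_eq_iff)
  show ?thesis unfolding e 
    unfolding Dk_cmult[OF smooth_add[OF sf smooth_cnj[OF sf]]] Dk_add[OF sf smooth_cnj[OF sf]] Dk_cnj[OF sf]
    by (simp add: fun_eq_iff complex_eq_iff)
qed

lemma Dk_Im: "smooth_fun f \<Longrightarrow> (Dop ^^ k) (\<lambda>x. of_real (Im (f x))) = (\<lambda>x. of_real (Im ((Dop ^^ k) f x)))"
proof -
  assume sf: "smooth_fun f"
  have e: "(\<lambda>x. of_real (Im (f x))) = (\<lambda>x. (-\<i>/2) * (f x - cnj (f x)))"
    by (simp add: fun_eq_iff complex_eq_iff)
  show ?thesis unfolding e
    unfolding Dk_cmult[OF smooth_diff_fun[OF sf smooth_cnj[OF sf]]] Dk_diff[OF sf smooth_cnj[OF sf]] Dk_cnj[OF sf]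
    by (simp add: fun_eq_iff complex_eq_iff)
qed


definition zp :: "(real \<Rightarrow> complex) \<Rightarrow> real \<Rightarrow> real \<Rightarrow> nat \<Rightarrow> nat \<Rightarrow> real set \<Rightarrow> bool" where
  "zp f a b i j Z \<longleftrightarrow> (\<forall>l<i. (Dop ^^ l) f a = 0) \<and> (\<forall>l<j. (Dop ^^ l) f b = 0) \<and>
     finite Z \<and> Z \<subseteq> {a<..<b} \<and> (\<forall>z\<in>Z. f z = 0)"

lemma rolle_many:
  fixes \<phi> :: "real \<Rightarrow> real"
  assumes "finite P" "continuous_on {a..b} \<phi>" "\<And>x. a < x \<Longrightarrow> x < b \<Longrightarrow> \<phi> differentiable (at x)"
  shows "P \<subseteq> {a..b} \<longrightarrow> (\<forall>p\<in>P. \<phi> p = 0) \<longrightarrow>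
    (\<exists>Q. finite Q \<and> card P \<le> card Q + 1 \<and> (\<forall>q\<in>Q. (\<exists>p\<in>P. p < q) \<and> (\<exists>p\<in>P. q < p)) \<and>
         (\<forall>q\<in>Q. DERIV \<phi> q :> 0))"
  using assms(1)
proof (induction P rule: finite_linorder_max_induct)
  case empty then show ?case by (intro impI exI[of _ "{}"]) auto
next
  case (insert c A)
  show ?case
  proof (intro impI)
    assume sub: "insert c A \<subseteq> {a..b}" and z: "\<forall>p\<in>insert c A. \<phi> p = 0"
    obtain Q where Q: "finite Q" "card A \<le> card Q + 1" "\<forall>q\<in>Q. (\<exists>p\<in>A. p < q) \<and> (\<exists>p\<in>A. q < p)"
      "\<forall>q\<in>Q. DERIV \<phi> q :> 0"
      using insert sub z by auto
    show "\<exists>Q. finite Q \<and> card (insert c A) \<le> card Q + 1 \<and>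
         (\<forall>q\<in>Q. (\<exists>p\<in>insert c A. p < q) \<and> (\<exists>p\<in>insert c A. q < p)) \<and> (\<forall>q\<in>Q. DERIV \<phi> q :> 0)"
    proof (cases "A = {}")
      case True then show ?thesis by (intro exI[of _ "{}"]) auto
    next
      case False
      define m where "m = Max A"
      have mA: "m \<in> A" using False insert(1) by (simp add: m_def)
      have mc: "m < c" using insert(2) mA by auto
      have cn: "c \<notin> A" using insert(2) by auto
      have "a \<le> m" "c \<le> b" using sub mA by auto
      then obtain \<xi> where \<xi>: "m < \<xi>" "\<xi> < c" "DERIV \<phi> \<xi> :> 0"
        using Rolle[of m c \<phi>] mc z mA assms(3) continuous_on_subset[OF assms(2), of "{m..c}"] by force
      have xn: "\<xi> \<notin> Q"
      proof
        assume "\<xi> \<in> Q"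
        then obtain p where "p \<in> A" "\<xi> < p" using Q(3) by blast
        then have "p \<le> m" using insert(1) by (simp add: m_def)
        then show False using \<xi> \<open>\<xi> < p\<close> by simp
      qed
      show ?thesis
      proof (intro exI[of _ "insert \<xi> Q"] conjI)
        show "finite (insert \<xi> Q)" using Q by simp
        show "card (insert c A) \<le> card (insert \<xi> Q) + 1" using Q xn cn insert(1) by simp
        show "\<forall>q\<in>insert \<xi> Q. (\<exists>p\<in>insert c A. p < q) \<and> (\<exists>p\<in>insert c A. q < p)"
          using Q(3) \<xi> mA by blast
        show "\<forall>q\<in>insert \<xi> Q. DERIV \<phi> q :> 0" using Q(4) \<xi> by blast
      qed
    qed
  qed
qed

definition ind :: "nat \<Rightarrow> nat" where "ind i = (if i > 0 then 1 else 0)"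

lemma rolle_pattern:
  fixes \<phi> :: "real \<Rightarrow> real"
  assumes ab: "a < b" and fin: "finite Z" and Zs: "Z \<subseteq> {a<..<b}" and zZ: "\<forall>z\<in>Z. \<phi> z = 0"
    and za: "i > 0 \<Longrightarrow> \<phi> a = 0" and zb: "j > 0 \<Longrightarrow> \<phi> b = 0"
    and cont: "continuous_on {a..b} \<phi>" and dif: "\<And>x. a < x \<Longrightarrow> x < b \<Longrightarrow> \<phi> differentiable (at x)"
  shows "\<exists>Q. finite Q \<and> Q \<subseteq> {a<..<b} \<and> card Z + ind i + ind j \<le> card Q + 1 \<and> (\<forall>q\<in>Q. DERIV \<phi> q :> 0)"
proof -
  define P where "P = Z \<union> (if i > 0 then {a} else {}) \<union> (if j > 0 then {b} else {})"
  have finP: "finite P" using fin by (simp add: P_def)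
  have Psub: "P \<subseteq> {a..b}" using Zs ab by (auto simp: P_def)
  have Pz: "\<forall>p\<in>P. \<phi> p = 0" using zZ za zb by (auto simp: P_def split: if_splits)
  have cardP: "card P = card Z + ind i + ind j"
  proof -
    have aZ: "a \<notin> Z" and bZ: "b \<notin> Z" using Zs by auto
    show ?thesis using fin aZ bZ ab by (auto simp: P_def ind_def card_insert_if)
  qed
  obtain Q where Q: "finite Q" "card P \<le> card Q + 1" "\<forall>q\<in>Q. (\<exists>p\<in>P. p < q) \<and> (\<exists>p\<in>P. q < p)"
      "\<forall>q\<in>Q. DERIV \<phi> q :> 0"
    using rolle_many[OF finP cont dif] Psub Pz by blast
  have "Q \<subseteq> {a<..<b}"
  proof
    fix q assume "q \<in> Q"
    then obtain p1 p2 where "p1 \<in> P" "p1 < q" "p2 \<in> P" "q < p2" using Q(3) by blast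
    then show "q \<in> {a<..<b}" using Psub by force
  qed
  then show ?thesis using Q cardP by auto
qed

lemma zp_Dop:
  assumes ab: "a < b" and sf: "smooth_fun f" and rf: "realf f" and z: "zp f a b i j Z"
  shows "\<exists>Z'. zp (Dop f) a b (i - 1) (j - 1) Z' \<and> i + j + card Z \<le> (i - 1) + (j - 1) + card Z' + 1"
proof -
  let ?\<phi> = "\<lambda>x. Re (f x)"
  have zz: "\<forall>l<i. (Dop ^^ l) f a = 0" "\<forall>l<j. (Dop ^^ l) f b = 0" "finite Z" "Z \<subseteq> {a<..<b}" "\<forall>z\<in>Z. f z = 0"
    using z by (auto simp: zp_def)
  have cont: "continuous_on {a..b} ?\<phi>"
    by (intro continuous_intros smooth_cont[OF sf])
  have dif: "?\<phi> differentiable (at x)" for x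
    using realf_deriv[OF smooth_diff[OF sf]] by (metis real_differentiable_def)
  obtain Q where Q: "finite Q" "Q \<subseteq> {a<..<b}" "card Z + ind i + ind j \<le> card Q + 1" "\<forall>q\<in>Q. DERIV ?\<phi> q :> 0"
  proof -
    have za: "Re (f a) = 0" if "i > 0"
    proof -
      have "(Dop ^^ 0) f a = 0" using zz(1) that by blast
      then show ?thesis by simp
    qed
    have zb: "Re (f b) = 0" if "j > 0"
    proof -
      have "(Dop ^^ 0) f b = 0" using zz(2) that by blast
      then show ?thesis by simp
    qed
    have zZ: "\<forall>z\<in>Z. Re (f z) = 0" using zz(5) by simp
    show ?thesis using rolle_pattern[OF ab zz(3,4) zZ za zb cont dif] that by blast
  qed
  have "Dop f q = 0" if "q \<in> Q" for q
  proof -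
    have "Re (Dop f q) = 0" using DERIV_unique[OF realf_deriv[OF smooth_diff[OF sf]]] Q(4) that by blast
    moreover have "Im (Dop f q) = 0" using realf_Dop[OF sf rf] by (simp add: realf_def)
    ultimately show ?thesis by (simp add: complex_eq_iff)
  qed
  moreover have "\<forall>l<i - 1. (Dop ^^ l) (Dop f) a = 0" "\<forall>l<j - 1. (Dop ^^ l) (Dop f) b = 0"
    using zz(1,2) by (auto simp: funpow_Dop_Suc[symmetric] simp del: funpow.simps)
  ultimately have "zp (Dop f) a b (i - 1) (j - 1) Q" using Q by (simp add: zp_def)
  moreover have "i + j + card Z \<le> (i - 1) + (j - 1) + card Q + 1"
    using Q(3) by (auto simp: ind_def split: if_splits)
  ultimately show ?thesis by blast
qed

lemma zp_mult:
  assumes "smooth_fun w" "smooth_fun f" "zp f a b i j Z"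
  shows "zp (\<lambda>x. w x * f x) a b i j Z"
  using assms mult_ord[OF assms(1,2)] unfolding zp_def by auto

lemma zp_div:
  assumes "smooth_fun w" "smooth_fun f" "w a \<noteq> 0" "w b \<noteq> 0" "\<forall>z\<in>Z. w z \<noteq> 0" "zp (\<lambda>x. w x * f x) a b i j Z"
  shows "zp f a b i j Z"
  using assms div_ord[OF assms(1,2)] unfolding zp_def by auto

lemma zp_zero_exists:
  assumes "zp f a b i j Z" "1 \<le> i + j + card Z" "a < b"
  shows "\<exists>x\<in>{a..b}. f x = 0"
proof -
  have "i > 0 \<or> j > 0 \<or> Z \<noteq> {}" using assms(2) by auto
  then show ?thesis
  proof (elim disjE)
    assume "i > 0" then have "(Dop ^^ 0) f a = 0" using assms(1) unfolding zp_def by blast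
    then have "f a = 0" by simp
    then show ?thesis using assms(3) by auto
  next
    assume "j > 0" then have "(Dop ^^ 0) f b = 0" using assms(1) unfolding zp_def by blast
    then have "f b = 0" by simp
    then show ?thesis using assms(3) by auto
  next
    assume "Z \<noteq> {}" then obtain z where "z \<in> Z" by blast
    moreover have "z \<in> {a..b}" "f z = 0" using assms(1) \<open>z \<in> Z\<close> by (auto simp: zp_def)
    ultimately show ?thesis by blast
  qed
qed

lemma realf_mult: "realf f \<Longrightarrow> realf g \<Longrightarrow> realf (\<lambda>x. f x * g x)"
  by (simp add: realf_def)
lemma realf_add: "realf f \<Longrightarrow> realf g \<Longrightarrow> realf (\<lambda>x. f x + g x)"
  by (simp add: realf_def)
lemma realf_diff: "realf f \<Longrightarrow> realf g \<Longrightarrow> realf (\<lambda>x. f x - g x)"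
  by (simp add: realf_def)
lemma realf_cmult: "Im c = 0 \<Longrightarrow> realf f \<Longrightarrow> realf (\<lambda>x. c * f x)"
  by (simp add: realf_def)
lemma realf_ex: "Im c = 0 \<Longrightarrow> realf (ex c)"
  by (simp add: realf_def ex_real)
lemma realf_ofreal: "realf (\<lambda>x. of_real (g x))"
  by (simp add: realf_def)


definition sfun :: "real \<Rightarrow> real \<Rightarrow> real \<Rightarrow> complex" where
  "sfun \<beta> \<gamma> = (\<lambda>x. complex_of_real (sin (\<beta> * x + \<gamma>)))"
definition cfun :: "real \<Rightarrow> real \<Rightarrow> real \<Rightarrow> complex" where
  "cfun \<beta> \<gamma> = (\<lambda>x. complex_of_real (cos (\<beta> * x + \<gamma>)))"

lemma sin_DERIV: "((\<lambda>x. sin (\<beta> * x + \<gamma>)) has_real_derivative cos (\<beta> * x + \<gamma>) * \<beta>) (at x)"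
  by (auto intro!: derivative_eq_intros)

lemma cos_DERIV: "((\<lambda>x. cos (\<beta> * x + \<gamma>)) has_real_derivative - sin (\<beta> * x + \<gamma>) * \<beta>) (at x)"
  by (auto intro!: derivative_eq_intros)

lemma sfun_hasder: "(sfun \<beta> \<gamma> has_vector_derivative of_real \<beta> * cfun \<beta> \<gamma> x) (at x)"
proof -
  have "(sfun \<beta> \<gamma> has_vector_derivative of_real (cos (\<beta> * x + \<gamma>) * \<beta>)) (at x)"
    unfolding sfun_def by (rule has_vector_derivative_of_real[OF sin_DERIV])
  then show ?thesis by (simp add: cfun_def mult.commute)
qed

lemma cfun_hasder: "(cfun \<beta> \<gamma> has_vector_derivative - of_real \<beta> * sfun \<beta> \<gamma> x) (at x)"
proof -
  have "(cfun \<beta> \<gamma> has_vector_derivative of_real (- sin (\<beta> * x + \<gamma>) * \<beta>)) (at x)"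
    unfolding cfun_def by (rule has_vector_derivative_of_real[OF cos_DERIV])
  then show ?thesis by (simp add: sfun_def mult.commute)
qed

lemma Dop_sfun: "Dop (sfun \<beta> \<gamma>) = (\<lambda>x. of_real \<beta> * cfun \<beta> \<gamma> x)"
  using sfun_hasder Dop_at by blast

lemma Dop_cfun: "Dop (cfun \<beta> \<gamma>) = (\<lambda>x. - of_real \<beta> * sfun \<beta> \<gamma> x)"
  using cfun_hasder Dop_at by blast

lemma sc_diff: "sfun \<beta> \<gamma> differentiable (at x)" "cfun \<beta> \<gamma> differentiable (at x)"
  using sfun_hasder cfun_hasder by (blast intro: differentiableI_vector)+

lemma Dk_sc: "\<exists>A B. (Dop ^^ k) (sfun \<beta> \<gamma>) = (\<lambda>x. A * sfun \<beta> \<gamma> x + B * cfun \<beta> \<gamma> x)"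
proof (induction k)
  case 0 show ?case by (intro exI[of _ 1] exI[of _ 0]) simp
next
  case (Suc k)
  then obtain A B where e: "(Dop ^^ k) (sfun \<beta> \<gamma>) = (\<lambda>x. A * sfun \<beta> \<gamma> x + B * cfun \<beta> \<gamma> x)" by blast
  have "Dop (\<lambda>x. A * sfun \<beta> \<gamma> x + B * cfun \<beta> \<gamma> x) =
      (\<lambda>x. (- B * of_real \<beta>) * sfun \<beta> \<gamma> x + (A * of_real \<beta>) * cfun \<beta> \<gamma> x)"
  proof
    fix x
    have "((\<lambda>x. A * sfun \<beta> \<gamma> x + B * cfun \<beta> \<gamma> x) has_vector_derivative
        A * (of_real \<beta> * cfun \<beta> \<gamma> x) + B * (- of_real \<beta> * sfun \<beta> \<gamma> x)) (at x)"
      by (intro has_vector_derivative_add has_vector_derivative_mult_right sfun_hasder cfun_hasder)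
    then show "Dop (\<lambda>x. A * sfun \<beta> \<gamma> x + B * cfun \<beta> \<gamma> x) x =
      (- B * of_real \<beta>) * sfun \<beta> \<gamma> x + (A * of_real \<beta>) * cfun \<beta> \<gamma> x"
      by (simp add: Dop_at algebra_simps)
  qed
  then have "(Dop ^^ Suc k) (sfun \<beta> \<gamma>) = (\<lambda>x. (- B * of_real \<beta>) * sfun \<beta> \<gamma> x + (A * of_real \<beta>) * cfun \<beta> \<gamma> x)"
    using e by (simp only: funpow.simps(2) o_apply)
  then show ?case by blast
qed

lemma smooth_sfun: "smooth_fun (sfun \<beta> \<gamma>)"
  unfolding smooth_fun_def
proof (intro allI)
  fix k x
  obtain A B where "(Dop ^^ k) (sfun \<beta> \<gamma>) = (\<lambda>x. A * sfun \<beta> \<gamma> x + B * cfun \<beta> \<gamma> x)" using Dk_sc by blast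
  then show "(Dop ^^ k) (sfun \<beta> \<gamma>) differentiable at x"
    by (simp add: differentiable_add differentiable_mult differentiable_const sc_diff)
qed

lemma smooth_cfun: "smooth_fun (cfun \<beta> \<gamma>)"
proof -
  have "smooth_fun (\<lambda>x. (1 / of_real \<beta>) * Dop (sfun \<beta> \<gamma>) x)" if "\<beta> \<noteq> 0"
    by (intro smooth_cmult smooth_Dop smooth_sfun)
  moreover have "(\<lambda>x. (1 / of_real \<beta>) * Dop (sfun \<beta> \<gamma>) x) = cfun \<beta> \<gamma>" if "\<beta> \<noteq> 0"
    using that by (simp add: Dop_sfun)
  moreover have "smooth_fun (cfun 0 \<gamma>)" by (simp add: cfun_def smooth_const)
  ultimately show ?thesis by (cases "\<beta> = 0") auto
qed

definition good :: "real \<Rightarrow> real \<Rightarrow> complex list \<Rightarrow> bool" where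
  "good a b L \<longleftrightarrow> cc L \<and> (\<forall>m\<in>set L. \<bar>Im m\<bar> * (b - a) < pi)"

definition chebP :: "real \<Rightarrow> real \<Rightarrow> complex list \<Rightarrow> bool" where
  "chebP a b L \<longleftrightarrow> (\<forall>f i j Z. f \<in> ESp L \<longrightarrow> realf f \<longrightarrow> zp f a b i j Z \<longrightarrow> length L \<le> i + j + card Z
      \<longrightarrow> (\<forall>x\<in>{a..b}. f x = 0))"

lemma realf_T: "smooth_fun f \<Longrightarrow> realf f \<Longrightarrow> Im l = 0 \<Longrightarrow> realf (T l f)"
  unfolding T_def by (intro realf_diff realf_Dop realf_cmult)

lemma cheb_step_real:
  assumes ab: "a < b" and l: "l \<in> set L" "Im l = 0" and IH: "chebP a b (remove1 l L)"
  shows "chebP a b L"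
  unfolding chebP_def
proof (intro allI impI)
  fix f i j Z
  assume fE: "f \<in> ESp L" and rf: "realf f" and z: "zp f a b i j Z" and N: "length L \<le> i + j + card Z"
  have sf: "smooth_fun f" using ESp_smooth[OF fE] .
  define h where "h = (\<lambda>x. ex (-l) x * f x)"
  have sh: "smooth_fun h" unfolding h_def by (intro smooth_mult smooth_ex sf)
  have rh: "realf h" unfolding h_def using l(2) rf by (intro realf_mult realf_ex) auto
  have zh: "zp h a b i j Z" unfolding h_def by (rule zp_mult[OF smooth_ex sf z])
  have hd: "(h has_vector_derivative ex (-l) x * T l f x) (at x)" for x
    unfolding h_def by (rule ex_mult_T[OF sf])
  have Dh: "Dop h = (\<lambda>x. ex (-l) x * T l f x)" using hd Dop_at by blast
  obtain Z' where z': "zp (Dop h) a b (i - 1) (j - 1) Z'" and cnt: "i + j + card Z \<le> (i - 1) + (j - 1) + card Z' + 1"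
    using zp_Dop[OF ab sh rh zh] by blast
  have zT: "zp (T l f) a b (i - 1) (j - 1) Z'"
    by (rule zp_div[OF smooth_ex smooth_T[OF sf] ex_nonzero ex_nonzero _ z'[unfolded Dh]]) (simp add: ex_nonzero)
  have TE: "T l f \<in> ESp (remove1 l L)" using fE ESp_remove1[OF l(1)] by blast
  have rT: "realf (T l f)" using realf_T[OF sf rf l(2)] .
  have len: "length (remove1 l L) = length L - 1" using l(1) by (simp add: length_remove1)
  have L1: "1 \<le> length L" using l(1) by (cases L) auto
  have "length (remove1 l L) \<le> (i - 1) + (j - 1) + card Z'" using N cnt len L1 by linarith
  then have T0: "\<forall>x\<in>{a..b}. T l f x = 0"
    using IH[unfolded chebP_def, rule_format, OF TE rT zT] by blast
  have "1 \<le> i + j + card Z" using N L1 by linarith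
  then obtain x0 where x0: "x0 \<in> {a..b}" "h x0 = 0" using zp_zero_exists[OF zh _ ab] by blast
  show "\<forall>x\<in>{a..b}. f x = 0"
  proof
    fix x assume x: "x \<in> {a..b}"
    have "h x = h x0"
    proof (rule zero_deriv_const_on[of a b h])
      fix y assume "y \<in> {a..b}"
      then show "(h has_vector_derivative 0) (at y)" using hd[of y] T0 by simp
    qed (use x x0 in auto)
    then have "ex (-l) x * f x = 0" using x0 by (simp add: h_def)
    then show "f x = 0" by (simp add: ex_nonzero)
  qed
qed


definition ordv :: "(real \<Rightarrow> complex) \<Rightarrow> real \<Rightarrow> nat \<Rightarrow> bool" where
  "ordv f a i \<longleftrightarrow> (\<forall>l<i. (Dop ^^ l) f a = 0)"

lemma zp_ordv: "zp f a b i j Z \<longleftrightarrow> ordv f a i \<and> ordv f b j \<and> finite Z \<and> Z \<subseteq> {a<..<b} \<and> (\<forall>z\<in>Z. f z = 0)"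
  by (simp add: zp_def ordv_def)

lemma ordv_mono: "ordv f a i \<Longrightarrow> i' \<le> i \<Longrightarrow> ordv f a i'"
  by (simp add: ordv_def)

lemma ordv_Dop: "ordv f a i \<Longrightarrow> ordv (Dop f) a (i - 1)"
  by (simp add: ordv_def funpow_Dop_Suc[symmetric] del: funpow.simps)

lemma ordv_mult': "smooth_fun w \<Longrightarrow> smooth_fun f \<Longrightarrow> ordv f a i \<Longrightarrow> ordv (\<lambda>x. f x * w x) a i"
  unfolding ordv_def by (rule mult_ord')

lemma ordv_diff: "smooth_fun f \<Longrightarrow> smooth_fun g \<Longrightarrow> ordv f a i \<Longrightarrow> ordv g a i \<Longrightarrow> ordv (\<lambda>x. f x - g x) a i"
  unfolding ordv_def by (simp add: Dk_diff)

lemma sin_pos_interval: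
  assumes "0 < \<beta>" "\<beta> * (b - a) < pi" "x \<in> {a..b}"
  shows "0 < sin (\<beta> * x + (pi / 2 - \<beta> * (a + b) / 2))"
proof -
  have e: "\<beta> * x + (pi / 2 - \<beta> * (a + b) / 2) = pi / 2 + \<beta> * (x - (a + b) / 2)"
    by (simp add: algebra_simps)
  have d1: "x - (a + b) / 2 \<le> (b - a) / 2" "- ((b - a) / 2) \<le> x - (a + b) / 2"
    using assms(3) by (auto simp: field_simps)
  have u: "\<beta> * (x - (a + b) / 2) \<le> \<beta> * ((b - a) / 2)"
    using assms(1) d1 by (intro mult_left_mono) auto
  have l: "\<beta> * (- ((b - a) / 2)) \<le> \<beta> * (x - (a + b) / 2)"
    using assms(1) d1 by (intro mult_left_mono) auto
  have "\<beta> * ((b - a) / 2) < pi / 2" using assms(2) by simp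
  then show ?thesis unfolding e using u l by (intro sin_gt_zero) auto
qed

lemma cheb_step_pair:
  assumes ab: "a < b" and m: "m \<in> set L" "Im m \<noteq> 0" and bnd: "\<bar>Im m\<bar> * (b - a) < pi"
    and cm: "cnj m \<in> set (remove1 m L)" and IH: "chebP a b (remove1 (cnj m) (remove1 m L))"
  shows "chebP a b L"
  unfolding chebP_def
proof (intro allI impI)
  fix f i j Z
  assume fE: "f \<in> ESp L" and rf: "realf f" and z: "zp f a b i j Z" and N: "length L \<le> i + j + card Z"
  have sf: "smooth_fun f" using ESp_smooth[OF fE] .
  define \<alpha> where "\<alpha> = Re m"
  define \<beta> where "\<beta> = \<bar>Im m\<bar>"
  define \<gamma> where "\<gamma> = pi / 2 - \<beta> * (a + b) / 2"
  define a0 where "a0 = complex_of_real \<alpha>"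
  have \<beta>pos: "0 < \<beta>" using m(2) by (simp add: \<beta>_def)
  have spos: "0 < sin (\<beta> * x + \<gamma>)" if "x \<in> {a..b}" for x
    unfolding \<gamma>_def using sin_pos_interval[OF \<beta>pos _ that] bnd by (simp add: \<beta>_def)
  let ?s = "sfun \<beta> \<gamma>" and ?c = "cfun \<beta> \<gamma>"
  have ss: "smooth_fun ?s" and sc: "smooth_fun ?c" by (rule smooth_sfun smooth_cfun)+
  have Ds: "Dop ?s = (\<lambda>x. of_real \<beta> * ?c x)" by (rule Dop_sfun)
  define h where "h = (\<lambda>x. ex (-a0) x * f x)"
  have sh: "smooth_fun h" unfolding h_def by (intro smooth_mult smooth_ex sf)
  have rh: "realf h" unfolding h_def using rf by (intro realf_mult realf_ex) (auto simp: a0_def)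
  have zh: "zp h a b i j Z" unfolding h_def by (rule zp_mult[OF smooth_ex sf z])
  have sTf: "smooth_fun (T a0 f)" by (rule smooth_T[OF sf])
  have Dh: "Dop h = (\<lambda>x. ex (-a0) x * T a0 f x)" 
    using ex_mult_T[OF sf] Dop_at unfolding h_def by blast
  have hd1: "(Dop h has_vector_derivative ex (-a0) x * T a0 (T a0 f) x) (at x)" for x
    unfolding Dh by (rule ex_mult_T[OF sTf])
  define W where "W = (\<lambda>x. Dop h x * ?s x - h x * (of_real \<beta> * ?c x))"
  have sDh: "smooth_fun (Dop h)" using smooth_Dop[OF sh] .
  have sW: "smooth_fun W" unfolding W_def
    by (intro smooth_diff_fun smooth_mult sDh ss sh smooth_cmult sc)
  have rW: "realf W" unfolding W_def
    using realf_Dop[OF sh rh] rh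
    by (intro realf_diff realf_mult realf_cmult) (auto simp: sfun_def cfun_def realf_ofreal)
  define g where "g = T (cnj m) (T m f)"
  have gid: "T a0 (T a0 f) x + of_real (\<beta>^2) * f x = g x" for x
  proof -
    have e1: "cnj m + m = a0 + a0" by (simp add: a0_def \<alpha>_def complex_eq_iff)
    have e2: "cnj m * m = a0 * a0 + of_real (\<beta>^2)"
      by (simp add: a0_def \<alpha>_def \<beta>_def complex_eq_iff power2_eq_square)
    show ?thesis unfolding g_def T_T[OF sf] e1 e2 by (simp add: algebra_simps)
  qed
  have DW: "Dop W = (\<lambda>x. (?s x * ex (-a0) x) * g x)"
  proof
    fix x
    have "(W has_vector_derivative
        (Dop h x * (of_real \<beta> * ?c x) + ex (-a0) x * T a0 (T a0 f) x * ?s x)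
      - (h x * (of_real \<beta> * (- of_real \<beta> * ?s x)) + Dop h x * (of_real \<beta> * ?c x))) (at x)"
      unfolding W_def
      by (intro has_vector_derivative_diff has_vector_derivative_mult hd1 sfun_hasder
          has_vector_derivative_mult_right cfun_hasder Dop_works smooth_diff[OF sh])
    then have "Dop W x = ex (-a0) x * T a0 (T a0 f) x * ?s x + of_real (\<beta>^2) * h x * ?s x"
      by (simp add: Dop_at algebra_simps power2_eq_square)
    also have "\<dots> = (?s x * ex (-a0) x) * (T a0 (T a0 f) x + of_real (\<beta>^2) * f x)"
      by (simp add: h_def algebra_simps)
    finally show "Dop W x = (?s x * ex (-a0) x) * g x" by (simp only: gid)
  qed
  let ?\<phi> = "\<lambda>x. Re (h x) / sin (\<beta> * x + \<gamma>)"
  have ReW: "Re (W x) = Re (Dop h x) * sin (\<beta> * x + \<gamma>) - Re (h x) * (cos (\<beta> * x + \<gamma>) * \<beta>)" for x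
    by (simp add: W_def sfun_def cfun_def algebra_simps)
  have \<phi>d: "DERIV ?\<phi> x :> Re (W x) / (sin (\<beta> * x + \<gamma>) * sin (\<beta> * x + \<gamma>))"
    if "sin (\<beta> * x + \<gamma>) \<noteq> 0" for x
    unfolding ReW by (rule DERIV_divide[OF realf_deriv[OF smooth_diff[OF sh]] sin_DERIV that])
  have \<phi>cont: "continuous_on {a..b} ?\<phi>"
    using spos by (intro continuous_intros smooth_cont[OF sh]) force+
  have \<phi>dif: "?\<phi> differentiable (at x)" if "a < x" "x < b" for x
    using \<phi>d[of x] spos[of x] that by (auto simp: real_differentiable_def)
  have zz: "ordv h a i" "ordv h b j" "finite Z" "Z \<subseteq> {a<..<b}" "\<forall>z\<in>Z. h z = 0"
    using zh by (auto simp: zp_ordv)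
  have h0a: "h a = 0" if "i > 0" using zz(1) that unfolding ordv_def by (metis funpow_0)
  have h0b: "h b = 0" if "j > 0" using zz(2) that unfolding ordv_def by (metis funpow_0)
  obtain Q where Q: "finite Q" "Q \<subseteq> {a<..<b}" "card Z + ind i + ind j \<le> card Q + 1" "\<forall>q\<in>Q. DERIV ?\<phi> q :> 0"
    using rolle_pattern[OF ab zz(3,4), of ?\<phi> i j] zz(5) h0a h0b \<phi>cont \<phi>dif by auto
  have WQ: "W q = 0" if "q \<in> Q" for q
  proof -
    have qab: "q \<in> {a..b}" using Q(2) that by auto
    have sq: "sin (\<beta> * q + \<gamma>) \<noteq> 0" using spos[OF qab] by simp
    have "Re (W q) / (sin (\<beta> * q + \<gamma>) * sin (\<beta> * q + \<gamma>)) = 0"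
      using DERIV_unique[OF \<phi>d[OF sq]] Q(4) that by blast
    then have "Re (W q) = 0" using sq by simp
    then show ?thesis using rW by (simp add: realf_def complex_eq_iff)
  qed
  have oWa: "ordv W a (i - 1)"
  proof -
    have o1: "ordv (\<lambda>x. Dop h x * ?s x) a (i - 1)" by (rule ordv_mult'[OF ss sDh ordv_Dop[OF zz(1)]])
    have o2: "ordv (\<lambda>x. h x * (of_real \<beta> * ?c x)) a (i - 1)"
      by (rule ordv_mult'[OF smooth_cmult[OF sc] sh ordv_mono[OF zz(1)]]) simp
    show ?thesis unfolding W_def by (rule ordv_diff[OF smooth_mult[OF sDh ss] smooth_mult[OF sh smooth_cmult[OF sc]] o1 o2])
  qed
  have oWb: "ordv W b (j - 1)"
  proof -
    have o1: "ordv (\<lambda>x. Dop h x * ?s x) b (j - 1)" by (rule ordv_mult'[OF ss sDh ordv_Dop[OF zz(2)]])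
    have o2: "ordv (\<lambda>x. h x * (of_real \<beta> * ?c x)) b (j - 1)"
      by (rule ordv_mult'[OF smooth_cmult[OF sc] sh ordv_mono[OF zz(2)]]) simp
    show ?thesis unfolding W_def by (rule ordv_diff[OF smooth_mult[OF sDh ss] smooth_mult[OF sh smooth_cmult[OF sc]] o1 o2])
  qed
  have zW: "zp W a b (i - 1) (j - 1) Q" using oWa oWb Q WQ by (simp add: zp_ordv)
  have cntW: "i + j + card Z \<le> (i - 1) + (j - 1) + card Q + 1"
    using Q(3) by (auto simp: ind_def split: if_splits)
  obtain Q' where zDW: "zp (Dop W) a b (i - 1 - 1) (j - 1 - 1) Q'"
      and cntDW: "(i - 1) + (j - 1) + card Q \<le> (i - 1 - 1) + (j - 1 - 1) + card Q' + 1"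
    using zp_Dop[OF ab sW rW zW] by blast
  have sg: "smooth_fun g" unfolding g_def by (intro smooth_T sf)
  have sw: "smooth_fun (\<lambda>x. ?s x * ex (-a0) x)" by (intro smooth_mult ss smooth_ex)
  have wnz: "?s x * ex (-a0) x \<noteq> 0" if "x \<in> {a..b}" for x
    using spos[OF that] by (simp add: sfun_def ex_nonzero)
  have zg: "zp g a b (i - 1 - 1) (j - 1 - 1) Q'"
  proof (rule zp_div[OF sw sg])
    show "?s a * ex (-a0) a \<noteq> 0" "?s b * ex (-a0) b \<noteq> 0" using wnz ab by auto
    show "\<forall>z\<in>Q'. ?s z * ex (-a0) z \<noteq> 0" using zDW wnz by (auto simp: zp_def)
    show "zp (\<lambda>x. ?s x * ex (-a0) x * g x) a b (i - 1 - 1) (j - 1 - 1) Q'" using zDW DW by simp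
  qed
  have gE: "g \<in> ESp (remove1 (cnj m) (remove1 m L))"
  proof -
    have "T m f \<in> ESp (remove1 m L)" using ESp_remove1[OF m(1), of f, THEN iffD1, OF fE] by (rule conjunct2)
    then have "smooth_fun (T m f) \<and> T (cnj m) (T m f) \<in> ESp (remove1 (cnj m) (remove1 m L))"
      by (rule ESp_remove1[OF cm, THEN iffD1])
    then show ?thesis unfolding g_def by (rule conjunct2)
  qed
  have rg: "realf g"
  proof -
    have e: "g = (\<lambda>x. Dop (Dop f) x - (cnj m + m) * Dop f x + cnj m * m * f x)"
      unfolding g_def by (rule T_T[OF sf])
    show ?thesis unfolding e
      by (intro realf_add realf_diff realf_cmult realf_Dop smooth_Dop sf rf) (auto simp: complex_eq_iff)
  qed
  have len: "length (remove1 (cnj m) (remove1 m L)) = length L - 2"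
    using m(1) cm by (simp add: length_remove1)
  have L2: "2 \<le> length L"
  proof -
    have "length (remove1 m L) \<ge> 1" using cm by (cases "remove1 m L") auto
    then show ?thesis using m(1) by (simp add: length_remove1)
  qed
  have "length (remove1 (cnj m) (remove1 m L)) \<le> (i - 1 - 1) + (j - 1 - 1) + card Q'"
    using N cntW cntDW len L2 by linarith
  then have g0: "\<forall>x\<in>{a..b}. g x = 0"
    using IH[unfolded chebP_def, rule_format, OF gE rg zg] by blast
  have "1 \<le> (i - 1) + (j - 1) + card Q" using N cntW L2 by linarith
  then obtain w0 where w0: "w0 \<in> {a..b}" "W w0 = 0" using zp_zero_exists[OF zW _ ab] by blast
  have W0: "W x = 0" if "x \<in> {a..b}" for x
  proof -
    have "W x = W w0"
    proof (rule zero_deriv_const_on[of a b W])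
      fix y assume y: "y \<in> {a..b}"
      have "(W has_vector_derivative Dop W y) (at y)" by (rule Dop_works[OF smooth_diff[OF sW]])
      then show "(W has_vector_derivative 0) (at y)" using g0 y DW by simp
    qed (use that w0 in auto)
    then show ?thesis using w0 by simp
  qed
  have "1 \<le> i + j + card Z" using N L2 by linarith
  then obtain x0 where x0: "x0 \<in> {a..b}" "h x0 = 0" using zp_zero_exists[OF zh _ ab] by blast
  have \<phi>const: "?\<phi> x = ?\<phi> a" if "a \<le> x" "x \<le> b" for x
  proof (rule DERIV_isconst2[OF ab \<phi>cont _ that])
    fix y assume "a < y" "y < b"
    then have y: "y \<in> {a..b}" by auto
    have "sin (\<beta> * y + \<gamma>) \<noteq> 0" using spos[OF y] by simp
    then show "DERIV ?\<phi> y :> 0" using \<phi>d[of y] W0[OF y] by simp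
  qed
  have "?\<phi> x0 = 0" using x0 by simp
  moreover have "?\<phi> x0 = ?\<phi> a" using \<phi>const[of x0] x0(1) by simp
  ultimately have \<phi>a: "?\<phi> a = 0" by simp
  show "\<forall>x\<in>{a..b}. f x = 0"
  proof
    fix x assume x: "x \<in> {a..b}"
    have "?\<phi> x = ?\<phi> a" using \<phi>const[of x] x by simp
    then have "?\<phi> x = 0" using \<phi>a by simp
    then have "Re (h x) = 0" using spos[OF x] by simp
    then have "h x = 0" using rh by (simp add: realf_def complex_eq_iff)
    then show "f x = 0" by (simp add: h_def ex_nonzero)
  qed
qed


lemma sum_split_sigma:
  fixes F :: "nat \<Rightarrow> 'a::comm_monoid_add"
  assumes "p \<le> Suc m"
  shows "(\<Sum>j\<le>Suc m. F j) = F p + (\<Sum>i\<le>m. F (if i < p then i else Suc i))"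
proof -
  define \<sigma> where "\<sigma> = (\<lambda>i::nat. if i < p then i else Suc i)"
  have inj: "inj_on \<sigma> {..m}" by (auto simp: inj_on_def \<sigma>_def split: if_splits)
  have img: "{..Suc m} = insert p (\<sigma> ` {..m})"
  proof (intro equalityI subsetI)
    fix j assume j: "j \<in> {..Suc m}"
    show "j \<in> insert p (\<sigma> ` {..m})"
    proof (cases "j < p")
      case True then have "j = \<sigma> j" "j \<le> m" using assms by (auto simp: \<sigma>_def)
      then show ?thesis by blast
    next
      case False
      show ?thesis
      proof (cases "j = p")
        case True then show ?thesis by simp
      next
        case False
        then have "j > p" using \<open>\<not> j < p\<close> by simp
        then have "j = \<sigma> (j - 1)" "j - 1 \<le> m" using j by (auto simp: \<sigma>_def)
        then show ?thesis by blast
      qed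
    qed
  next
    fix j assume "j \<in> insert p (\<sigma> ` {..m})"
    then show "j \<in> {..Suc m}" using assms by (auto simp: \<sigma>_def)
  qed
  have pn: "p \<notin> \<sigma> ` {..m}" by (auto simp: \<sigma>_def split: if_splits)
  have "(\<Sum>j\<le>Suc m. F j) = F p + sum F (\<sigma> ` {..m})" unfolding img using pn by simp
  also have "\<dots> = F p + (\<Sum>i\<le>m. F (\<sigma> i))" using sum.reindex[OF inj, of F] by simp
  finally show ?thesis by (simp add: \<sigma>_def)
qed

lemma kernel_exists:
  fixes A :: "nat \<Rightarrow> nat \<Rightarrow> 'a::field"
  shows "\<exists>c. (\<exists>i\<le>m. c i \<noteq> 0) \<and> (\<forall>r<m. (\<Sum>i\<le>m. A r i * c i) = 0)"
proof (induction m arbitrary: A)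
  case 0 show ?case by (intro exI[of _ "\<lambda>_. 1"]) auto
next
  case (Suc m)
  show ?case
  proof (cases "\<forall>i\<le>Suc m. A m i = 0")
    case True
    obtain c where c: "\<exists>i\<le>m. c i \<noteq> 0" "\<forall>r<m. (\<Sum>i\<le>m. A r i * c i) = 0" using Suc.IH[of A] by blast
    define c' where "c' = c(Suc m := 0)"
    have "\<exists>i\<le>Suc m. c' i \<noteq> 0"
    proof -
      obtain i where i: "i \<le> m" "c i \<noteq> 0" using c(1) by blast
      then have "c' i \<noteq> 0" by (simp add: c'_def)
      then show ?thesis using i(1) le_SucI by blast
    qed
    moreover have "\<forall>r<Suc m. (\<Sum>i\<le>Suc m. A r i * c' i) = 0"
    proof (intro allI impI)
      fix r assume r: "r < Suc m"
      have e1: "(\<Sum>i\<le>m. A r i * c' i) = (\<Sum>i\<le>m. A r i * c i)"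
        by (rule sum.cong) (auto simp: c'_def)
      have e: "(\<Sum>i\<le>Suc m. A r i * c' i) = (\<Sum>i\<le>m. A r i * c i)"
        unfolding sum.atMost_Suc e1 by (simp add: c'_def)
      show "(\<Sum>i\<le>Suc m. A r i * c' i) = 0"
      proof (cases "r < m")
        case True then show ?thesis using c(2) e by simp
      next
        case False then have "r = m" using r by simp
        then show ?thesis using True by (simp add: c'_def)
      qed
    qed
    ultimately show ?thesis by blast
  next
    case False
    then obtain p where p: "p \<le> Suc m" "A m p \<noteq> 0" by blast
    define \<sigma> where "\<sigma> = (\<lambda>i::nat. if i < p then i else Suc i)"
    define B where "B = (\<lambda>r i. A r (\<sigma> i) - A r p / A m p * A m (\<sigma> i))"
    obtain d where d: "\<exists>i\<le>m. d i \<noteq> 0" "\<forall>r<m. (\<Sum>i\<le>m. B r i * d i) = 0" using Suc.IH[of B] by blast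
    define c where "c = (\<lambda>j. if j = p then - (\<Sum>i\<le>m. A m (\<sigma> i) * d i) / A m p
                              else d (if j < p then j else j - 1))"
    have c\<sigma>: "c (\<sigma> i) = d i" for i by (auto simp: c_def \<sigma>_def)
    have split: "(\<Sum>j\<le>Suc m. A r j * c j) = A r p * c p + (\<Sum>i\<le>m. A r (\<sigma> i) * d i)" for r
      using sum_split_sigma[OF p(1), of "\<lambda>j. A r j * c j"] c\<sigma> by (simp add: \<sigma>_def)
    have "\<exists>i\<le>Suc m. c i \<noteq> 0"
    proof -
      obtain i where "i \<le> m" "d i \<noteq> 0" using d(1) by blast
      then show ?thesis using c\<sigma>[of i] by (intro exI[of _ "\<sigma> i"]) (auto simp: \<sigma>_def)
    qed
    moreover have "\<forall>r<Suc m. (\<Sum>j\<le>Suc m. A r j * c j) = 0"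
    proof (intro allI impI)
      fix r assume r: "r < Suc m"
      show "(\<Sum>j\<le>Suc m. A r j * c j) = 0"
      proof (cases "r = m")
        case True
        then show ?thesis unfolding split using p(2) by (simp add: c_def)
      next
        case False
        then have rm: "r < m" using r by simp
        have "(\<Sum>i\<le>m. B r i * d i) = (\<Sum>i\<le>m. A r (\<sigma> i) * d i) - A r p / A m p * (\<Sum>i\<le>m. A m (\<sigma> i) * d i)"
          by (simp add: B_def algebra_simps sum_subtractf sum_distrib_left)
        then have "A r p * c p + (\<Sum>i\<le>m. A r (\<sigma> i) * d i) = (\<Sum>i\<le>m. B r i * d i)"
          by (simp add: c_def algebra_simps)
        then show ?thesis unfolding split using d(2) rm by simp
      qed
    qed
    ultimately show ?thesis by blast
  qed
qed


lemma good_sub: "good a b L \<Longrightarrow> cc L' \<Longrightarrow> set L' \<subseteq> set L \<Longrightarrow> good a b L'"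
  unfolding good_def by blast

lemma cheb_good: "a < b \<Longrightarrow> good a b L \<Longrightarrow> chebP a b L"
proof (induction "length L" arbitrary: L rule: less_induct)
  case less
  show ?case
  proof (cases "L = []")
    case True then show ?thesis by (auto simp: chebP_def ESp_Nil)
  next
    case False
    show ?thesis
    proof (cases "\<exists>l\<in>set L. Im l = 0")
      case True
      then obtain l where l: "l \<in> set L" "Im l = 0" by blast
      have g: "good a b (remove1 l L)"
        using good_sub[OF less.prems(2) cc_remove_real[OF _ l] set_remove1_subset] less.prems(2)
        by (simp add: good_def)
      have "length L > 0" using l(1) by (cases L) auto
      then have "length (remove1 l L) < length L" using l(1) by (simp add: length_remove1)
      then have "chebP a b (remove1 l L)" using less.hyps less.prems(1) g by blast
      then show ?thesis by (rule cheb_step_real[OF less.prems(1) l])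
    next
      case nr: False
      define m where "m = hd L"
      have m: "m \<in> set L" using False by (simp add: m_def)
      have mI: "Im m \<noteq> 0" using nr m by blast
      have ccL: "cc L" using less.prems(2) by (simp add: good_def)
      have cm: "cnj m \<in> set L" by (rule cc_conj_mem[OF ccL m])
      have "cnj m \<noteq> m" using mI by (simp add: complex_eq_iff)
      then have cm': "cnj m \<in> set (remove1 m L)" using cm by (simp add: in_set_remove1)
      have sub: "set (remove1 (cnj m) (remove1 m L)) \<subseteq> set L"
        by (meson set_remove1_subset subset_trans)
      have g: "good a b (remove1 (cnj m) (remove1 m L))"
        using good_sub[OF less.prems(2) cc_remove_pair[OF ccL m cm'] sub] .
      have "length L > 0" using m by (cases L) auto
      then have "length (remove1 (cnj m) (remove1 m L)) < length L"
        using m cm' by (simp add: length_remove1)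
      then have "chebP a b (remove1 (cnj m) (remove1 m L))" using less.hyps less.prems(1) g by blast
      moreover have "\<bar>Im m\<bar> * (b - a) < pi" using less.prems(2) m by (simp add: good_def)
      ultimately show ?thesis using cheb_step_pair[OF less.prems(1) m mI _ cm'] by blast
    qed
  qed
qed

lemma zp_Re: "smooth_fun f \<Longrightarrow> zp f a b i j Z \<Longrightarrow> zp (\<lambda>x. of_real (Re (f x))) a b i j Z"
  unfolding zp_def by (simp add: Dk_Re)

lemma zp_Im: "smooth_fun f \<Longrightarrow> zp f a b i j Z \<Longrightarrow> zp (\<lambda>x. of_real (Im (f x))) a b i j Z"
  unfolding zp_def by (simp add: Dk_Im)

lemma cheb:
  assumes ab: "a < b" and g: "good a b L" and fE: "f \<in> ESp L" and z: "zp f a b i j Z"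
    and N: "length L \<le> i + j + card Z"
  shows "\<forall>x\<in>{a..b}. f x = 0"
proof -
  have C: "chebP a b L" by (rule cheb_good[OF ab g])
  have ccL: "cc L" using g by (simp add: good_def)
  have sf: "smooth_fun f" using ESp_smooth[OF fE] .
  have "\<forall>x\<in>{a..b}. of_real (Re (f x)) = (0::complex)"
    using C[unfolded chebP_def, rule_format, OF Re_in_ESp[OF ccL fE] realf_ofreal zp_Re[OF sf z] N] by blast
  moreover have "\<forall>x\<in>{a..b}. of_real (Im (f x)) = (0::complex)"
    using C[unfolded chebP_def, rule_format, OF Im_in_ESp[OF ccL fE] realf_ofreal zp_Im[OF sf z] N] by blast
  ultimately show ?thesis by (simp add: complex_eq_iff)
qed

lemma zero_global:
  assumes ab: "a < b" and fE: "f \<in> ESp L" and z: "\<forall>x\<in>{a..b}. f x = 0"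
  shows "f = (\<lambda>x. 0)"
proof -
  have "\<forall>i<length L. (Dop ^^ i) f a = 0"
    using zero_on_Dk[OF ESp_smooth[OF fE] ab z] ab by auto
  then show ?thesis by (rule ode_uniq[OF fE])
qed

lemma cheb_global:
  assumes ab: "a < b" and g: "good a b L" and fE: "f \<in> ESp L"
    and oa: "ordv f a i" and ob: "ordv f b j" and N: "length L \<le> i + j"
  shows "f = (\<lambda>x. 0)"
proof -
  have "zp f a b i j {}" using oa ob by (simp add: zp_ordv)
  then have "\<forall>x\<in>{a..b}. f x = 0" using cheb[OF ab g fE _ ] N by simp
  then show ?thesis by (rule zero_global[OF ab fE])
qed


definition bern :: "real \<Rightarrow> real \<Rightarrow> complex list \<Rightarrow> nat \<Rightarrow> real \<Rightarrow> complex" where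
  "bern a b L k = (THE p. p \<in> ESp L \<and> zero_order p a k \<and> zero_order p b (length L - 1 - k)
      \<and> (Dop ^^ k) p a = 1)"

lemma bernstein_bern: "bernstein lam n a b k = bern a b (map lam [0..<Suc n]) k"
  by (simp add: bernstein_def bern_def ESpace_ESp)

lemma zero_order_ordv: "zero_order f a k \<longleftrightarrow> ordv f a k \<and> (Dop ^^ k) f a \<noteq> 0"
  by (simp add: zero_order_def ordv_def)

lemma Dk_lincomb:
  assumes "finite I" "\<And>k. k \<in> I \<Longrightarrow> smooth_fun (p k)"
  shows "(Dop ^^ i) (\<lambda>x. \<Sum>k\<in>I. c k * p k x) = (\<lambda>x. \<Sum>k\<in>I. c k * (Dop ^^ i) (p k) x)"
  using assms by (simp add: Dk_sum smooth_cmult Dk_cmult)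

lemma smooth_lincomb:
  assumes "finite I" "\<And>k. k \<in> I \<Longrightarrow> smooth_fun (p k)"
  shows "smooth_fun (\<lambda>x. \<Sum>k\<in>I. c k * p k x)"
  using assms by (intro smooth_sum smooth_cmult) auto

lemma ESp_lincomb:
  assumes "finite I" "\<And>k. k \<in> I \<Longrightarrow> p k \<in> ESp L"
  shows "(\<lambda>x. \<Sum>k\<in>I. c k * p k x) \<in> ESp L"
  using assms by (intro ESp_sum ESp_cmult) auto

lemma Dk_zero: "(Dop ^^ j) (\<lambda>x. 0) = (\<lambda>x. 0)"
  by (cases j) (simp, simp only: Dk_const)

lemma ordv_0: "ordv f a k \<Longrightarrow> 0 < k \<Longrightarrow> f a = 0"
  unfolding ordv_def by (metis funpow_0)

lemma nonzero_exists:
  assumes ab: "a < b" and g: "good a b L" and k: "k < length L"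
  shows "\<exists>f\<in>ESp L. ordv f a k \<and> ordv f b (length L - 1 - k) \<and> (Dop ^^ k) f a \<noteq> 0"
proof -
  define n where "n = length L - 1"
  have nL: "length L = Suc n" using k by (simp add: n_def)
  have "\<forall>r. \<exists>f. f \<in> ESp L \<and> (\<forall>i<length L. (Dop ^^ i) f a = (if i = r then 1 else 0))"
  proof
    fix r show "\<exists>f. f \<in> ESp L \<and> (\<forall>i<length L. (Dop ^^ i) f a = (if i = r then 1 else 0))"
      using ode_exist[of L a "\<lambda>i. if i = r then 1 else 0"] by blast
  qed
  then have "\<exists>\<phi>. \<forall>r. \<phi> r \<in> ESp L \<and> (\<forall>i<length L. (Dop ^^ i) (\<phi> r) a = (if i = r then 1 else 0))"
    by (rule choice)
  then obtain \<phi> where \<phi>0: "\<forall>r. \<phi> r \<in> ESp L \<and> (\<forall>i<length L. (Dop ^^ i) (\<phi> r) a = (if i = r then 1 else 0))"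
    by blast
  have \<phi>: "\<And>r. \<phi> r \<in> ESp L" "\<And>r i. i < length L \<Longrightarrow> (Dop ^^ i) (\<phi> r) a = (if i = r then 1 else 0)"
    using \<phi>0 by auto
  define A where "A = (\<lambda>r i. (Dop ^^ r) (\<phi> (k + i)) b)"
  obtain c where c: "\<exists>i\<le>n - k. c i \<noteq> 0" "\<forall>r<n - k. (\<Sum>i\<le>n - k. A r i * c i) = 0"
    using kernel_exists[of "n - k" A] by blast
  define f where "f = (\<lambda>x. \<Sum>i\<le>n - k. c i * \<phi> (k + i) x)"
  have fE: "f \<in> ESp L" unfolding f_def by (intro ESp_lincomb \<phi>) auto
  have Df: "(Dop ^^ l) f = (\<lambda>x. \<Sum>i\<le>n - k. c i * (Dop ^^ l) (\<phi> (k + i)) x)" for l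
    unfolding f_def by (rule Dk_lincomb) (auto intro: ESp_smooth \<phi>)
  have oa: "ordv f a k" unfolding ordv_def
  proof (intro allI impI)
    fix l assume l: "l < k"
    then have "l < length L" using k by simp
    then show "(Dop ^^ l) f a = 0" unfolding Df using l \<phi>(2) by (auto intro!: sum.neutral)
  qed
  have ob: "ordv f b (n - k)" unfolding ordv_def Df using c(2) by (simp add: A_def mult.commute)
  have fnz: "f \<noteq> (\<lambda>x. 0)"
  proof
    assume f0: "f = (\<lambda>x. 0)"
    obtain i0 where i0: "i0 \<le> n - k" "c i0 \<noteq> 0" using c(1) by blast
    have "(Dop ^^ (k + i0)) f a = c i0"
    proof -
      have "k + i0 < length L" using i0 k nL by simp
      then have "(Dop ^^ (k + i0)) f a = (\<Sum>i\<le>n - k. c i * (if k + i0 = k + i then 1 else 0))"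
        unfolding Df using \<phi>(2) by simp
      also have "\<dots> = (\<Sum>i\<le>n - k. (if i = i0 then c i else 0))" by (rule sum.cong) auto
      also have "\<dots> = c i0" using i0(1) by (simp add: sum.delta)
      finally show ?thesis .
    qed
    moreover have "(Dop ^^ (k + i0)) f a = 0" unfolding f0 Dk_zero by simp
    ultimately show False using i0 by simp
  qed
  have "(Dop ^^ k) f a \<noteq> 0"
  proof
    assume "(Dop ^^ k) f a = 0"
    then have "ordv f a (Suc k)" using oa by (simp add: ordv_def less_Suc_eq)
    then have "f = (\<lambda>x. 0)" using cheb_global[OF ab g fE _ ob] nL k by simp
    then show False using fnz by simp
  qed
  then show ?thesis using fE oa ob by (auto simp: n_def)
qed

lemma bern_unique_aux:
  assumes ab: "a < b" and g: "good a b L" and k: "k < length L"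
    and p: "p \<in> ESp L" "ordv p a k" "ordv p b (length L - 1 - k)" "(Dop ^^ k) p a = 1"
    and q: "q \<in> ESp L" "ordv q a k" "ordv q b (length L - 1 - k)" "(Dop ^^ k) q a = 1"
  shows "p = q"
proof -
  define d where "d = (\<lambda>x. p x - q x)"
  have dE: "d \<in> ESp L" unfolding d_def by (rule ESp_diff[OF p(1) q(1)])
  have Dd: "(Dop ^^ l) d = (\<lambda>x. (Dop ^^ l) p x - (Dop ^^ l) q x)" for l
    unfolding d_def by (rule Dk_diff[OF ESp_smooth[OF p(1)] ESp_smooth[OF q(1)]])
  have "ordv d a (Suc k)" using p(2,4) q(2,4) by (auto simp: ordv_def Dd less_Suc_eq)
  moreover have "ordv d b (length L - 1 - k)" using p(3) q(3) by (auto simp: ordv_def Dd)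
  ultimately have "d = (\<lambda>x. 0)" using cheb_global[OF ab g dE] k by simp
  then show ?thesis by (auto simp: d_def fun_eq_iff)
qed

lemma bern_exists:
  assumes ab: "a < b" and g: "good a b L" and k: "k < length L"
  shows "\<exists>p. p \<in> ESp L \<and> zero_order p a k \<and> zero_order p b (length L - 1 - k) \<and> (Dop ^^ k) p a = 1"
proof -
  obtain f where fE: "f \<in> ESp L" and oa: "ordv f a k" and ob: "ordv f b (length L - 1 - k)"
      and fk: "(Dop ^^ k) f a \<noteq> 0"
    using nonzero_exists[OF ab g k] by blast
  define p where "p = (\<lambda>x. (1 / (Dop ^^ k) f a) * f x)"
  have pE: "p \<in> ESp L" unfolding p_def by (rule ESp_cmult[OF fE])
  have Dp: "(Dop ^^ l) p = (\<lambda>x. (1 / (Dop ^^ k) f a) * (Dop ^^ l) f x)" for l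
    unfolding p_def by (rule Dk_cmult[OF ESp_smooth[OF fE]])
  have pa: "ordv p a k" using oa by (simp add: ordv_def Dp)
  have pb: "ordv p b (length L - 1 - k)" using ob by (simp add: ordv_def Dp)
  have pk: "(Dop ^^ k) p a = 1" using fk by (simp add: Dp)
  have "(Dop ^^ (length L - 1 - k)) p b \<noteq> 0"
  proof
    assume "(Dop ^^ (length L - 1 - k)) p b = 0"
    then have "ordv p b (Suc (length L - 1 - k))" using pb by (simp add: ordv_def less_Suc_eq)
    then have "p = (\<lambda>x. 0)" using cheb_global[OF ab g pE pa] k by simp
    then have "(Dop ^^ k) p a = 0" by (simp add: Dk_zero)
    then show False using pk by simp
  qed
  then show ?thesis using pE pa pb pk by (auto simp: zero_order_ordv)
qed

lemma bern_props:
  assumes ab: "a < b" and g: "good a b L" and k: "k < length L"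
  shows "bern a b L k \<in> ESp L" "ordv (bern a b L k) a k" "(Dop ^^ k) (bern a b L k) a = 1"
    "ordv (bern a b L k) b (length L - 1 - k)" "(Dop ^^ (length L - 1 - k)) (bern a b L k) b \<noteq> 0"
proof -
  let ?P = "\<lambda>p. p \<in> ESp L \<and> zero_order p a k \<and> zero_order p b (length L - 1 - k) \<and> (Dop ^^ k) p a = 1"
  have ex1: "\<exists>!p. ?P p"
  proof (rule ex_ex1I)
    show "\<exists>p. ?P p" by (rule bern_exists[OF ab g k])
  next
    fix p q assume "?P p" "?P q"
    then show "p = q" using bern_unique_aux[OF ab g k] by (auto simp: zero_order_ordv)
  qed
  have "?P (bern a b L k)" unfolding bern_def by (rule theI'[OF ex1])
  then show "bern a b L k \<in> ESp L" "ordv (bern a b L k) a k" "(Dop ^^ k) (bern a b L k) a = 1"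
    "ordv (bern a b L k) b (length L - 1 - k)" "(Dop ^^ (length L - 1 - k)) (bern a b L k) b \<noteq> 0"
    by (auto simp: zero_order_ordv)
qed

lemma bern_unique:
  assumes ab: "a < b" and g: "good a b L" and k: "k < length L"
    and q: "q \<in> ESp L" "ordv q a k" "ordv q b (length L - 1 - k)" "(Dop ^^ k) q a = 1"
  shows "q = bern a b L k"
  using bern_unique_aux[OF ab g k q bern_props(1,2,4,3)[OF ab g k]] .

lemma bern_real:
  assumes ab: "a < b" and g: "good a b L" and k: "k < length L"
  shows "realf (bern a b L k)"
proof -
  let ?p = "bern a b L k"
  have pE: "?p \<in> ESp L" by (rule bern_props[OF ab g k])
  have sp: "smooth_fun ?p" by (rule ESp_smooth[OF pE])
  have "(\<lambda>x. cnj (?p x)) \<in> ESp L" using g pE by (simp add: good_def cc_def)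
  moreover have "ordv (\<lambda>x. cnj (?p x)) a k" using bern_props(2)[OF ab g k] by (simp add: ordv_def Dk_cnj[OF sp])
  moreover have "ordv (\<lambda>x. cnj (?p x)) b (length L - 1 - k)" using bern_props(4)[OF ab g k] by (simp add: ordv_def Dk_cnj[OF sp])
  moreover have "(Dop ^^ k) (\<lambda>x. cnj (?p x)) a = 1" using bern_props(3)[OF ab g k] by (simp add: Dk_cnj[OF sp])
  ultimately have "(\<lambda>x. cnj (?p x)) = ?p" by (rule bern_unique[OF ab g k])
  then show ?thesis by (simp add: realf_cnj)
qed


lemma pos_near:
  "smooth_fun f \<Longrightarrow> realf f \<Longrightarrow> ordv f a k \<Longrightarrow> Re ((Dop ^^ k) f a) > 0 \<Longrightarrow>
     \<exists>\<delta>>0. \<forall>x. a < x \<and> x < a + \<delta> \<longrightarrow> Re (f x) > 0"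
proof (induction k arbitrary: f)
  case 0
  have "isCont (\<lambda>x. Re (f x)) a" by (rule DERIV_isCont[OF realf_deriv[OF smooth_diff[OF "0.prems"(1)]]])
  then have "((\<lambda>x. Re (f x)) \<longlongrightarrow> Re (f a)) (at a)" by (simp add: isCont_def)
  then have "eventually (\<lambda>x. 0 < Re (f x)) (at a)" using "0.prems"(4) by (intro order_tendstoD(1)) auto
  then obtain d where d: "d > 0" "\<And>x. x \<noteq> a \<Longrightarrow> dist x a < d \<Longrightarrow> 0 < Re (f x)"
    by (auto simp: eventually_at)
  show ?case
  proof (intro exI[of _ d] conjI allI impI)
    fix x assume "a < x \<and> x < a + d"
    then show "0 < Re (f x)" using d(2)[of x] by (auto simp: dist_real_def)
  qed (use d in auto)
next
  case (Suc k)
  have sD: "smooth_fun (Dop f)" using smooth_Dop[OF Suc.prems(1)] .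
  have rD: "realf (Dop f)" using realf_Dop[OF Suc.prems(1,2)] .
  have oD: "ordv (Dop f) a k" using ordv_Dop[OF Suc.prems(3)] by simp
  have pD: "Re ((Dop ^^ k) (Dop f) a) > 0" using Suc.prems(4) by (simp add: funpow_Dop_Suc del: funpow.simps)
  obtain \<delta> where \<delta>: "\<delta> > 0" "\<And>x. a < x \<Longrightarrow> x < a + \<delta> \<Longrightarrow> Re (Dop f x) > 0"
    using Suc.IH[OF sD rD oD pD] by blast
  have fa: "f a = 0" using ordv_0[OF Suc.prems(3)] by simp
  show ?case
  proof (intro exI[of _ \<delta>] conjI allI impI)
    fix x assume x: "a < x \<and> x < a + \<delta>"
    have cont: "continuous_on {a..x} (\<lambda>x. Re (f x))"
      by (intro continuous_at_imp_continuous_on ballI DERIV_isCont[OF realf_deriv[OF smooth_diff[OF Suc.prems(1)]]])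
    have dif: "(\<lambda>x. Re (f x)) differentiable (at y)" for y
      using realf_deriv[OF smooth_diff[OF Suc.prems(1)]] by (metis real_differentiable_def)
    obtain l z where lz: "a < z" "z < x" "DERIV (\<lambda>x. Re (f x)) z :> l" "Re (f x) - Re (f a) = (x - a) * l"
      using MVT[OF _ cont dif] x by blast
    have "l = Re (Dop f z)" using DERIV_unique[OF lz(3) realf_deriv[OF smooth_diff[OF Suc.prems(1)]]] .
    then have "l > 0" using \<delta>(2)[of z] lz x by simp
    then show "0 < Re (f x)" using lz(4) fa x by simp
  qed (use \<delta> in auto)
qed

lemma bern_pos:
  assumes ab: "a < b" and g: "good a b L" and k: "k < length L" and x: "x \<in> {a<..<b}"
  shows "Re (bern a b L k x) > 0"
proof -
  let ?p = "bern a b L k"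
  have pE: "?p \<in> ESp L" and pa: "ordv ?p a k" and pk: "(Dop ^^ k) ?p a = 1" and pb: "ordv ?p b (length L - 1 - k)"
    using bern_props[OF ab g k] by auto
  have sp: "smooth_fun ?p" using ESp_smooth[OF pE] .
  have rp: "realf ?p" by (rule bern_real[OF ab g k])
  have nz: "Re (?p z) \<noteq> 0" if z: "z \<in> {a<..<b}" for z
  proof
    assume "Re (?p z) = 0"
    then have pz: "?p z = 0" using rp by (simp add: realf_def complex_eq_iff)
    have "zp ?p a b k (length L - 1 - k) {z}" using pa pb z pz by (simp add: zp_ordv)
    then have "\<forall>x\<in>{a..b}. ?p x = 0" using cheb[OF ab g pE] k by simp
    then have "?p = (\<lambda>x. 0)" by (rule zero_global[OF ab pE])
    then show False using pk by (simp add: Dk_zero)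
  qed
  obtain \<delta> where \<delta>: "\<delta> > 0" "\<And>x. a < x \<Longrightarrow> x < a + \<delta> \<Longrightarrow> Re (?p x) > 0"
    using pos_near[OF sp rp pa] pk by auto
  show ?thesis
  proof (rule ccontr)
    assume "\<not> Re (?p x) > 0"
    then have neg: "Re (?p x) \<le> 0" by simp
    define y where "y = a + min \<delta> (x - a) / 2"
    have y: "a < y" "y < x" "y < a + \<delta>" using \<delta>(1) x by (auto simp: y_def min_def field_simps)
    have py: "Re (?p y) > 0" using \<delta>(2) y by simp
    have cont: "continuous_on {y..x} (\<lambda>x. Re (?p x))"
      by (intro continuous_at_imp_continuous_on ballI DERIV_isCont[OF realf_deriv[OF smooth_diff[OF sp]]])
    obtain z where z: "y \<le> z" "z \<le> x" "Re (?p z) = 0"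
      using IVT2'[of "\<lambda>x. Re (?p x)" x 0 y, OF neg _ _ cont] py y by auto
    have "z \<in> {a<..<b}" using z y x by auto
    then show False using nz z(3) by blast
  qed
qed

lemma span_bern:
  assumes ab: "a < b" and g: "good a b L" and fE: "f \<in> ESp L"
  shows "\<exists>c. \<forall>x. f x = (\<Sum>k<length L. c k * bern a b L k x)"
proof -
  let ?p = "bern a b L"
  have sp: "\<And>k. k < length L \<Longrightarrow> smooth_fun (?p k)" using bern_props(1)[OF ab g] ESp_smooth by blast
  have step: "m \<le> length L \<Longrightarrow> \<exists>c. \<forall>i<m. (Dop ^^ i) (\<lambda>x. \<Sum>k<m. c k * ?p k x) a = (Dop ^^ i) f a" for m
  proof (induction m)
    case 0 then show ?case by simp
  next
    case (Suc m)
    obtain c where c: "\<forall>i<m. (Dop ^^ i) (\<lambda>x. \<Sum>k<m. c k * ?p k x) a = (Dop ^^ i) f a"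
      using Suc by auto
    have mL: "m < length L" using Suc.prems by simp
    define v where "v = (Dop ^^ m) f a - (Dop ^^ m) (\<lambda>x. \<Sum>k<m. c k * ?p k x) a"
    define c' where "c' = (\<lambda>k. if k = m then v else c k)"
    have e: "(\<lambda>x. \<Sum>k<Suc m. c' k * ?p k x) = (\<lambda>x. (\<Sum>k<m. c k * ?p k x) + v * ?p m x)"
    proof
      fix x
      have "(\<Sum>k<m. c' k * ?p k x) = (\<Sum>k<m. c k * ?p k x)" by (rule sum.cong) (auto simp: c'_def)
      then show "(\<Sum>k<Suc m. c' k * ?p k x) = (\<Sum>k<m. c k * ?p k x) + v * ?p m x"
        by (simp add: c'_def)
    qed
    have s1: "smooth_fun (\<lambda>x. \<Sum>k<m. c k * ?p k x)" using sp mL by (intro smooth_lincomb) auto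
    have s2: "smooth_fun (?p m)" using sp mL by simp
    have D: "(Dop ^^ i) (\<lambda>x. \<Sum>k<Suc m. c' k * ?p k x) a
        = (Dop ^^ i) (\<lambda>x. \<Sum>k<m. c k * ?p k x) a + v * (Dop ^^ i) (?p m) a" for i
      unfolding e using s1 s2 by (simp add: Dk_add smooth_cmult Dk_cmult)
    have om: "ordv (?p m) a m" and pm: "(Dop ^^ m) (?p m) a = 1" using bern_props[OF ab g mL] by auto
    have "\<forall>i<Suc m. (Dop ^^ i) (\<lambda>x. \<Sum>k<Suc m. c' k * ?p k x) a = (Dop ^^ i) f a"
    proof (intro allI impI)
      fix i assume i: "i < Suc m"
      show "(Dop ^^ i) (\<lambda>x. \<Sum>k<Suc m. c' k * ?p k x) a = (Dop ^^ i) f a"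
      proof (cases "i < m")
        case True then show ?thesis unfolding D using c om by (simp add: ordv_def)
      next
        case False then have "i = m" using i by simp
        then show ?thesis unfolding D using pm by (simp add: v_def)
      qed
    qed
    then show ?case by blast
  qed
  obtain c where c: "\<forall>i<length L. (Dop ^^ i) (\<lambda>x. \<Sum>k<length L. c k * ?p k x) a = (Dop ^^ i) f a"
    using step by blast
  define h where "h = (\<lambda>x. f x - (\<Sum>k<length L. c k * ?p k x))"
  have hE: "h \<in> ESp L" unfolding h_def
    by (intro ESp_diff fE ESp_lincomb) (auto intro: bern_props(1)[OF ab g])
  have s1: "smooth_fun (\<lambda>x. \<Sum>k<length L. c k * ?p k x)" using sp by (intro smooth_lincomb) auto
  have "\<forall>i<length L. (Dop ^^ i) h a = 0"
    using c unfolding h_def by (simp add: Dk_diff[OF ESp_smooth[OF fE] s1])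
  then have "h = (\<lambda>x. 0)" by (rule ode_uniq[OF hE])
  then show ?thesis by (auto simp: h_def fun_eq_iff)
qed

lemma indep_bern:
  assumes ab: "a < b" and g: "good a b L" and z: "\<forall>x\<in>{a..b}. (\<Sum>k<length L. c k * bern a b L k x) = 0"
  shows "\<forall>k<length L. c k = 0"
proof -
  let ?p = "bern a b L"
  have sp: "\<And>k. k < length L \<Longrightarrow> smooth_fun (?p k)" using bern_props(1)[OF ab g] ESp_smooth by blast
  define h where "h = (\<lambda>x. \<Sum>k<length L. c k * ?p k x)"
  have sh: "smooth_fun h" unfolding h_def using sp by (intro smooth_lincomb) auto
  have Dh: "(Dop ^^ i) h a = (\<Sum>k<length L. c k * (Dop ^^ i) (?p k) a)" for i
    unfolding h_def using Dk_lincomb[of "{..<length L}" ?p i c] sp by simp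
  have h0: "(Dop ^^ i) h a = 0" for i using zero_on_Dk[OF sh ab] z ab by (auto simp: h_def)
  have "c i = 0" if "i < length L" for i
    using that
  proof (induction i rule: less_induct)
    case (less i)
    have "(\<Sum>k<length L. c k * (Dop ^^ i) (?p k) a) = (\<Sum>k<length L. if k = i then c i else 0)"
    proof (rule sum.cong)
      fix k assume k: "k \<in> {..<length L}"
      show "c k * (Dop ^^ i) (?p k) a = (if k = i then c i else 0)"
      proof (cases "k < i")
        case True then show ?thesis using less.IH less.prems by simp
      next
        case False
        show ?thesis
        proof (cases "k = i")
          case True then show ?thesis using bern_props(3)[OF ab g] k by simp
        next
          case False then have "i < k" using \<open>\<not> k < i\<close> by simp
          then show ?thesis using bern_props(2)[OF ab g] k False by (simp add: ordv_def)
        qed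
      qed
    qed simp
    also have "\<dots> = c i" using less.prems by (simp add: sum.delta)
    finally show ?case using Dh[of i] h0[of i] by simp
  qed
  then show ?thesis by blast
qed


lemma T_lincomb:
  assumes "finite I" "\<And>k. k \<in> I \<Longrightarrow> smooth_fun (p k)"
  shows "T l (\<lambda>x. \<Sum>k\<in>I. c k * p k x) = (\<lambda>x. \<Sum>k\<in>I. c k * T l (p k) x)"
proof -
  have "Dop (\<lambda>x. \<Sum>k\<in>I. c k * p k x) = (\<lambda>x. \<Sum>k\<in>I. c k * Dop (p k) x)"
    using Dk_lincomb[OF assms, where i=1 and c=c] by simp
  then show ?thesis by (simp add: T_def sum_subtractf algebra_simps sum_distrib_left)
qed

lemma ordv_lincomb:
  assumes "finite I" "\<And>k. k \<in> I \<Longrightarrow> smooth_fun (p k)" "\<And>k. k \<in> I \<Longrightarrow> ordv (p k) a i"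
  shows "ordv (\<lambda>x. \<Sum>k\<in>I. c k * p k x) a i"
  using assms unfolding ordv_def by (simp add: Dk_lincomb)

lemma ordv_uminus: "smooth_fun f \<Longrightarrow> ordv f a i \<Longrightarrow> ordv (\<lambda>x. - f x) a i"
  using Dk_cmult[of f _ "-1"] unfolding ordv_def by simp

lemma ordv_T: "smooth_fun f \<Longrightarrow> ordv f a i \<Longrightarrow> ordv (T l f) a (i - 1)"
  unfolding ordv_def by (simp add: Dk_T del: funpow.simps)

lemma rep_real:
  assumes ab: "a < b" and g: "good a b L" and rF: "realf F"
    and rep: "\<forall>x. F x = (\<Sum>k<length L. c k * bern a b L k x)"
  shows "\<forall>k<length L. Im (c k) = 0"
proof -
  have "\<forall>x\<in>{a..b}. (\<Sum>k<length L. (c k - cnj (c k)) * bern a b L k x) = 0"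
  proof
    fix x
    have "cnj (F x) = (\<Sum>k<length L. cnj (c k) * bern a b L k x)"
      using rep bern_real[OF ab g] by (simp add: realf_cnj[symmetric] fun_eq_iff) (intro sum.cong, auto simp: realf_def complex_eq_iff)
    moreover have "cnj (F x) = F x" using rF by (simp add: realf_def complex_eq_iff)
    ultimately show "(\<Sum>k<length L. (c k - cnj (c k)) * bern a b L k x) = 0"
      using rep by (simp add: algebra_simps sum_subtractf)
  qed
  then have "\<forall>k<length L. c k - cnj (c k) = 0" by (rule indep_bern[OF ab g])
  then show ?thesis by (simp add: complex_eq_iff)
qed

locale setting =
  fixes a b :: real and \<mu> :: complex and L' :: "complex list" and c :: "nat \<Rightarrow> complex"
  assumes ab: "a < b" and gL: "good a b (\<mu> # L')" and mr: "Im \<mu> = 0"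
    and rep: "\<forall>x. ex \<mu> x = (\<Sum>k\<le>length L'. c k * bern a b (\<mu> # L') k x)"
begin

abbreviation "n \<equiv> length L'"
abbreviation "p \<equiv> bern a b (\<mu> # L')"
abbreviation "q \<equiv> bern a b L'"

lemma gL': "good a b L'"
proof -
  have "cc (remove1 \<mu> (\<mu> # L'))" using cc_remove_real[of "\<mu> # L'" \<mu>, OF _ _ mr] gL by (simp add: good_def)
  then show ?thesis using gL by (simp add: good_def)
qed

lemma pprops: assumes "k \<le> n"
  shows "p k \<in> ESp (\<mu> # L')" "ordv (p k) a k" "(Dop ^^ k) (p k) a = 1"
    "ordv (p k) b (n - k)" "(Dop ^^ (n - k)) (p k) b \<noteq> 0" "realf (p k)" "smooth_fun (p k)"
  using bern_props[OF ab gL, of k] bern_real[OF ab gL, of k] assms ESp_smooth by auto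

lemma rep': "\<forall>x. ex \<mu> x = (\<Sum>k<length (\<mu> # L'). c k * p k x)"
  using rep by (simp add: lessThan_Suc_atMost)

lemma c_real: "k \<le> n \<Longrightarrow> Im (c k) = 0"
  using rep_real[OF ab gL realf_ex[OF mr] rep'] by (simp add: less_Suc_eq_le)

lemma p_a: "k \<le> n \<Longrightarrow> p k a = (if k = 0 then 1 else 0)"
  using pprops(3)[of k] ordv_0[OF pprops(2)[of k]] by (cases k) auto

lemma p_b: "k < n \<Longrightarrow> p k b = 0"
  using ordv_0[OF pprops(4)[of k]] by simp

lemma c0: "c 0 = ex \<mu> a"
proof -
  have "ex \<mu> a = (\<Sum>k\<le>n. c k * p k a)" using rep by simp
  also have "\<dots> = (\<Sum>k\<le>n. if k = 0 then c 0 else 0)" by (rule sum.cong) (auto simp: p_a)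
  finally show ?thesis by simp
qed

definition S :: "nat \<Rightarrow> real \<Rightarrow> complex" where
  "S k = (\<lambda>x. \<Sum>j\<le>k. c j * T \<mu> (p j) x)"

lemma Tp_E: "j \<le> n \<Longrightarrow> T \<mu> (p j) \<in> ESp L'"
  using pprops(1) ESp_Cons by blast

lemma Tp_smooth: "j \<le> n \<Longrightarrow> smooth_fun (T \<mu> (p j))"
  using smooth_T pprops(7) by blast

lemma T_sum_zero: "(\<lambda>x. \<Sum>j\<le>n. c j * T \<mu> (p j) x) = (\<lambda>x. 0)"
proof -
  have "T \<mu> (\<lambda>x. \<Sum>j\<le>n. c j * p j x) = (\<lambda>x. \<Sum>j\<le>n. c j * T \<mu> (p j) x)"
    by (rule T_lincomb) (auto intro: pprops(7))
  moreover have "(\<lambda>x. \<Sum>j\<le>n. c j * p j x) = ex \<mu>" using rep by auto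
  ultimately show ?thesis by (simp add: T_ex)
qed

lemma S_tail: assumes "k \<le> n" shows "S k = (\<lambda>x. - (\<Sum>j\<in>{k<..n}. c j * T \<mu> (p j) x))"
proof
  fix x
  have "{..n} = {..k} \<union> {k<..n}" using assms by auto
  then have "(\<Sum>j\<le>n. c j * T \<mu> (p j) x) = (\<Sum>j\<le>k. c j * T \<mu> (p j) x) + (\<Sum>j\<in>{k<..n}. c j * T \<mu> (p j) x)"
    by (simp add: sum.union_disjoint ivl_disj_int)
  then show "S k x = - (\<Sum>j\<in>{k<..n}. c j * T \<mu> (p j) x)"
    using fun_cong[OF T_sum_zero, of x] by (simp add: S_def eq_neg_iff_add_eq_0 add.commute)
qed

lemma S_E: "k \<le> n \<Longrightarrow> S k \<in> ESp L'"
  unfolding S_def by (intro ESp_lincomb Tp_E) auto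

lemma S_smooth: "k \<le> n \<Longrightarrow> smooth_fun (S k)"
  using S_E ESp_smooth by blast

lemma S_ordv_a: assumes "k \<le> n" shows "ordv (S k) a k"
proof -
  have "ordv (\<lambda>x. \<Sum>j\<in>{k<..n}. c j * T \<mu> (p j) x) a k"
  proof (rule ordv_lincomb)
    fix j assume j: "j \<in> {k<..n}"
    show "smooth_fun (T \<mu> (p j))" using j Tp_smooth by auto
    have "ordv (T \<mu> (p j)) a (j - 1)" using j by (intro ordv_T pprops) auto
    then show "ordv (T \<mu> (p j)) a k" using j by (elim ordv_mono) auto
  qed auto
  then show ?thesis unfolding S_tail[OF assms]
    by (intro ordv_uminus smooth_lincomb) (auto intro: Tp_smooth)
qed

lemma S_ordv_b: assumes "k \<le> n" shows "ordv (S k) b (n - 1 - k)"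
  unfolding S_def
proof (rule ordv_lincomb)
  fix j assume j: "j \<in> {..k}"
  show "smooth_fun (T \<mu> (p j))" using j assms Tp_smooth by auto
  have "ordv (T \<mu> (p j)) b (n - j - 1)" using j assms by (intro ordv_T pprops) auto
  then show "ordv (T \<mu> (p j)) b (n - 1 - k)" using j by (elim ordv_mono) auto
qed auto

definition \<sigma> :: "nat \<Rightarrow> complex" where "\<sigma> k = (Dop ^^ k) (S k) a"

lemma qprops: assumes "k < n"
  shows "q k \<in> ESp L'" "ordv (q k) a k" "(Dop ^^ k) (q k) a = 1"
    "ordv (q k) b (n - 1 - k)" "realf (q k)" "smooth_fun (q k)"
  using bern_props[OF ab gL', of k] bern_real[OF ab gL', of k] assms ESp_smooth by auto

lemma S_eq: assumes "k < n" shows "S k = (\<lambda>x. \<sigma> k * q k x)"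
proof -
  define d where "d = (\<lambda>x. S k x - \<sigma> k * q k x)"
  have dE: "d \<in> ESp L'" unfolding d_def using assms by (intro ESp_diff S_E ESp_cmult qprops) auto
  have sS: "smooth_fun (S k)" using assms S_smooth by simp
  have sq: "smooth_fun (\<lambda>x. \<sigma> k * q k x)" using assms by (intro smooth_cmult qprops)
  have Dd: "(Dop ^^ l) d = (\<lambda>x. (Dop ^^ l) (S k) x - \<sigma> k * (Dop ^^ l) (q k) x)" for l
    unfolding d_def Dk_diff[OF sS sq] Dk_cmult[OF qprops(6)[OF assms]] ..
  have "ordv d a (Suc k)"
    using S_ordv_a[of k] qprops(2,3)[OF assms] assms unfolding ordv_def Dd
    by (auto simp: less_Suc_eq \<sigma>_def)
  moreover have "ordv d b (n - 1 - k)"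
    using S_ordv_b[of k] qprops(4)[OF assms] assms unfolding ordv_def Dd by auto
  ultimately have "d = (\<lambda>x. 0)" using cheb_global[OF ab gL' dE] assms by simp
  then show ?thesis by (auto simp: d_def fun_eq_iff)
qed

lemma c_succ: assumes "k < n" shows "c (Suc k) = - \<sigma> k"
proof -
  have e: "S (Suc k) = (\<lambda>x. S k x + c (Suc k) * T \<mu> (p (Suc k)) x)" by (simp add: S_def)
  have "(Dop ^^ k) (S (Suc k)) a = 0" using S_ordv_a[of "Suc k"] assms by (simp add: ordv_def)
  moreover have "(Dop ^^ k) (S (Suc k)) a = \<sigma> k + c (Suc k) * (Dop ^^ k) (T \<mu> (p (Suc k))) a"
    unfolding e using assms
    by (simp add: Dk_add S_smooth smooth_cmult Tp_smooth Dk_cmult \<sigma>_def del: funpow.simps)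
  moreover have "(Dop ^^ k) (T \<mu> (p (Suc k))) a = 1"
    using pprops(2,3)[of "Suc k"] assms by (simp add: Dk_T pprops(7) ordv_def del: funpow.simps)
  ultimately show ?thesis by (simp add: eq_neg_iff_add_eq_0 add.commute)
qed

lemma S_real: assumes "k \<le> n" shows "realf (S k)"
proof -
  have r: "Im (T \<mu> (p j) x) = 0" if "j \<le> n" for j x
    using realf_T[OF pprops(7) pprops(6) mr, of j] that by (simp add: realf_def)
  show ?thesis unfolding S_def realf_def Im_sum
    using r c_real assms by (auto intro!: sum.neutral)
qed

lemma \<sigma>_real: "k \<le> n \<Longrightarrow> Im (\<sigma> k) = 0"
  using realf_Dk[OF S_smooth S_real] by (simp add: \<sigma>_def realf_def)

end


lemma Re_hasder: "(g has_vector_derivative d) (at x) \<Longrightarrow> ((\<lambda>x. Re (g x)) has_real_derivative Re d) (at x)"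
  unfolding has_real_derivative_iff_has_vector_derivative
  by (rule bounded_linear.has_vector_derivative[OF bounded_linear_Re])

lemma abel:
  fixes t S :: "nat \<Rightarrow> complex"
  shows "(\<Sum>k\<le>n. t k * (S k - (if k = 0 then 0 else S (k - 1)))) = t n * S n + (\<Sum>k<n. (t k - t (Suc k)) * S k)"
proof (induction n)
  case 0 then show ?case by simp
next
  case (Suc n)
  then show ?case by (simp add: algebra_simps)
qed

context setting begin

lemma \<sigma>_neg: assumes k: "k < n" shows "Re (\<sigma> k) < 0"
proof -
  define F where "F = (\<lambda>x. \<Sum>j\<le>k. c j * p j x)"
  have sF: "smooth_fun F" unfolding F_def using k by (intro smooth_lincomb) (auto intro: pprops(7))
  have TF: "T \<mu> F = S k" unfolding F_def S_def using k by (intro T_lincomb) (auto intro: pprops(7))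
  define G where "G = (\<lambda>x. ex (-\<mu>) x * F x)"
  have Gd: "(G has_vector_derivative ex (-\<mu>) x * (\<sigma> k * q k x)) (at x)" for x
    using ex_mult_T[OF sF, of \<mu> x] TF S_eq[OF k] unfolding G_def by simp
  have Fa: "F a = c 0"
  proof -
    have "F a = (\<Sum>j\<le>k. if j = 0 then c 0 else 0)" unfolding F_def
      using k by (intro sum.cong) (auto simp: p_a)
    then show ?thesis by simp
  qed
  have Ga: "G a = 1" using ex_neg[of "\<mu>" a] by (simp add: G_def Fa c0 mult.commute)
  have Gb: "G b = 0" using k by (simp add: G_def F_def p_b)
  have rd: "((\<lambda>x. Re (G x)) has_real_derivative Re (ex (-\<mu>) x * (\<sigma> k * q k x))) (at x)" for x
    by (rule Re_hasder[OF Gd])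
  have cont: "continuous_on {a..b} (\<lambda>x. Re (G x))"
    by (intro continuous_at_imp_continuous_on ballI DERIV_isCont[OF rd])
  have dif: "(\<lambda>x. Re (G x)) differentiable (at x)" for x
    using rd by (metis real_differentiable_def)
  obtain l z where lz: "a < z" "z < b" "DERIV (\<lambda>x. Re (G x)) z :> l" "Re (G b) - Re (G a) = (b - a) * l"
    using MVT[OF ab cont dif] by blast
  have l: "l = Re (ex (-\<mu>) z * (\<sigma> k * q k z))" using DERIV_unique[OF lz(3) rd] .
  have eq: "(b - a) * l = -1" using lz(4) Ga Gb by simp
  have "l < 0"
  proof (rule ccontr)
    assume "\<not> l < 0"
    then have "0 \<le> (b - a) * l" using ab by simp
    then show False using eq by simp
  qed
  moreover have "Re (ex (-\<mu>) z * (\<sigma> k * q k z)) = exp (Re (-\<mu>) * z) * (Re (\<sigma> k) * Re (q k z))"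
  proof -
    have "Im (-\<mu>) = 0" using mr by simp
    then have "ex (-\<mu>) z = of_real (exp (Re (-\<mu>) * z))" by (rule ex_real)
    moreover have "Im (\<sigma> k) = 0" using \<sigma>_real k by simp
    moreover have "Im (q k z) = 0" using qprops(5)[OF k] by (simp add: realf_def)
    ultimately show ?thesis by simp
  qed
  moreover have "Re (q k z) > 0" using bern_pos[OF ab gL'] k lz by simp
  ultimately have neg: "exp (Re (-\<mu>) * z) * (Re (\<sigma> k) * Re (q k z)) < 0" and qp: "Re (q k z) > 0"
    using l by auto
  show ?thesis
  proof (rule ccontr)
    assume "\<not> Re (\<sigma> k) < 0"
    then have "0 \<le> Re (\<sigma> k) * Re (q k z)" using qp by simp
    then have "0 \<le> exp (Re (-\<mu>) * z) * (Re (\<sigma> k) * Re (q k z))" by simp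
    then show False using neg by simp
  qed
qed

lemma c_pos: assumes "k \<le> n" shows "Re (c k) > 0"
proof (cases k)
  case 0 then show ?thesis using mr by (simp add: c0 ex_real)
next
  case (Suc k') then show ?thesis using c_succ[of k'] \<sigma>_neg[of k'] assms by simp
qed

end


context setting begin

lemma c_ofreal: "k \<le> n \<Longrightarrow> c k = of_real (Re (c k))"
  using c_real by (simp add: complex_eq_iff)

lemma cTp: "k \<le> n \<Longrightarrow> c k * T \<mu> (p k) x = S k x - (if k = 0 then 0 else S (k - 1) x)"
  by (cases k) (simp_all add: S_def)

lemma S_n: "S n = (\<lambda>x. 0)"
  using T_sum_zero by (simp add: S_def)

lemma t_mono:
  assumes L'eq: "L' = \<mu> # L''"
    and repe: "\<forall>x. ex \<mu> x = (\<Sum>k\<le>length L''. e k * bern a b (\<mu> # L'') k x)"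
    and repd: "\<forall>x. xex \<mu> x = (\<Sum>k\<le>n. d k * p k x)" and d_real: "\<forall>k\<le>n. Im (d k) = 0"
  shows "\<forall>k<n. Re (d k) / Re (c k) < Re (d (Suc k)) / Re (c (Suc k))"
proof -
  have gE: "good a b (\<mu> # L'')" using gL' L'eq by simp
  interpret E: setting a b \<mu> L'' e using ab gE mr repe by unfold_locales auto
  have qE: "bern a b (\<mu> # L'') = q" using L'eq by simp
  have nL: "n = Suc (length L'')" using L'eq by simp
  define tr where "tr k = Re (d k) / Re (c k)" for k
  have dk: "d k = of_real (tr k) * c k" if "k \<le> n" for k
  proof -
    have "Re (c k) > 0" using c_pos that by simp
    then show ?thesis using d_real that c_real[OF that] by (simp add: tr_def complex_eq_iff)
  qed
  have sum1: "(\<Sum>k\<le>n. d k * T \<mu> (p k) x) = ex \<mu> x" for x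
  proof -
    have "T \<mu> (\<lambda>x. \<Sum>k\<le>n. d k * p k x) = (\<lambda>x. \<Sum>k\<le>n. d k * T \<mu> (p k) x)"
      by (rule T_lincomb) (auto intro: pprops(7))
    moreover have "(\<lambda>x. \<Sum>k\<le>n. d k * p k x) = xex \<mu>" using repd by auto
    ultimately show ?thesis using T_xex by metis
  qed
  have sum2: "(\<Sum>k\<le>n. d k * T \<mu> (p k) x) = (\<Sum>k<n. ((of_real (tr k) - of_real (tr (Suc k))) * \<sigma> k) * q k x)" for x
  proof -
    have "(\<Sum>k\<le>n. d k * T \<mu> (p k) x) = (\<Sum>k\<le>n. of_real (tr k) * (S k x - (if k = 0 then 0 else S (k - 1) x)))"
      by (rule sum.cong) (auto simp: dk cTp[symmetric] mult.assoc)
    also have "\<dots> = of_real (tr n) * S n x + (\<Sum>k<n. (of_real (tr k) - of_real (tr (Suc k))) * S k x)"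
      by (rule abel)
    also have "\<dots> = (\<Sum>k<n. ((of_real (tr k) - of_real (tr (Suc k))) * \<sigma> k) * q k x)"
      by (simp add: S_n) (rule sum.cong, auto simp: S_eq)
    finally show ?thesis .
  qed
  have sum3: "ex \<mu> x = (\<Sum>k<n. e k * q k x)" for x
    using repe qE nL by (simp add: lessThan_Suc_atMost)
  have "\<forall>x\<in>{a..b}. (\<Sum>k<length L'. (((of_real (tr k) - of_real (tr (Suc k))) * \<sigma> k) - e k) * q k x) = 0"
  proof
    fix x
    have "(\<Sum>k<length L'. (((of_real (tr k) - of_real (tr (Suc k))) * \<sigma> k) - e k) * q k x)
      = (\<Sum>k<n. ((of_real (tr k) - of_real (tr (Suc k))) * \<sigma> k) * q k x) - (\<Sum>k<n. e k * q k x)"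
      by (simp only: left_diff_distrib sum_subtractf)
    also have "\<dots> = 0" using sum1[of x] sum2[of x] sum3[of x] by simp
    finally show "(\<Sum>k<length L'. (((of_real (tr k) - of_real (tr (Suc k))) * \<sigma> k) - e k) * q k x) = 0" .
  qed
  then have co: "\<forall>k<length L'. ((of_real (tr k) - of_real (tr (Suc k))) * \<sigma> k) - e k = 0"
    by (rule indep_bern[OF ab gL'])
  show ?thesis
  proof (intro allI impI)
    fix k assume k: "k < n"
    have eq: "of_real (tr k - tr (Suc k)) * \<sigma> k = e k" using co k nL by simp
    have "(tr k - tr (Suc k)) * Re (\<sigma> k) = Re (e k)" using arg_cong[OF eq, of Re] by simp
    moreover have "Re (e k) > 0" using E.c_pos k nL by simp
    moreover have "Re (\<sigma> k) < 0" using \<sigma>_neg k by simp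
    ultimately have "tr k < tr (Suc k)"
    proof -
      assume h: "(tr k - tr (Suc k)) * Re (\<sigma> k) = Re (e k)" "0 < Re (e k)" "Re (\<sigma> k) < 0"
      show "tr k < tr (Suc k)"
      proof (rule ccontr)
        assume "\<not> tr k < tr (Suc k)"
        then have "0 \<le> tr k - tr (Suc k)" by simp
        then have "(tr k - tr (Suc k)) * Re (\<sigma> k) \<le> 0" using h(3) by (simp add: mult_nonneg_nonpos)
        then show False using h by simp
      qed
    qed
    then show "Re (d k) / Re (c k) < Re (d (Suc k)) / Re (c (Suc k))" by (simp add: tr_def)
  qed
qed

lemma t_ends:
  assumes repd: "\<forall>x. xex \<mu> x = (\<Sum>k\<le>n. d k * p k x)"
  shows "d 0 = of_real a * c 0" "d n = of_real b * c n"
proof -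
  have "xex \<mu> a = (\<Sum>k\<le>n. d k * p k a)" using repd by simp
  also have "\<dots> = (\<Sum>k\<le>n. if k = 0 then d 0 else 0)" by (rule sum.cong) (auto simp: p_a)
  finally show "d 0 = of_real a * c 0" by (simp add: xex_def c0)
next
  have pb: "p k b = 0" if "k \<le> n" "k \<noteq> n" for k using p_b that by simp
  have "xex \<mu> b = (\<Sum>k\<le>n. d k * p k b)" using repd by simp
  also have "\<dots> = (\<Sum>k\<le>n. if k = n then d n * p n b else 0)" by (rule sum.cong) (auto simp: pb)
  finally have 1: "of_real b * ex \<mu> b = d n * p n b" by (simp add: xex_def)
  have "ex \<mu> b = (\<Sum>k\<le>n. c k * p k b)" using rep by simp
  also have "\<dots> = (\<Sum>k\<le>n. if k = n then c n * p n b else 0)" by (rule sum.cong) (auto simp: pb)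
  finally have 2: "ex \<mu> b = c n * p n b" by simp
  have "p n b \<noteq> 0" using pprops(5)[of n] by simp
  then show "d n = of_real b * c n" using 1 2 by (simp add: algebra_simps)
qed

end


lemma exp_ex: "exp (l * complex_of_real y) = ex l y" by (simp add: ex_def)

theorem mainTheorem16:
  fixes lam :: "nat \<Rightarrow> complex" and n :: nat and a b :: real
  assumes "n \<ge> 1"
    and "lam 0 = lam 1" and "Im (lam 0) = 0"
    and "closed_cnj (ESpace lam n)"
    and "0 < b - a"
    and "Mn lam n = 0 \<or> b - a < pi / Mn lam n"
  shows "\<exists>t \<alpha>. good_nodes lam n a b t \<alpha> \<and>
           (\<forall>t' \<alpha>'. good_nodes lam n a b t' \<alpha>' \<longrightarrow> (\<forall>k\<le>n. t' k = t k \<and> \<alpha>' k = \<alpha> k))"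
proof -
  define \<mu> where "\<mu> = lam 0"
  define L'' where "L'' = map lam [2..<Suc n]"
  define L' where "L' = \<mu> # L''"
  have u1: "[0..<Suc n] = 0 # [Suc 0..<Suc n]" by (rule upt_conv_Cons) simp
  have u2: "[Suc 0..<Suc n] = Suc 0 # [2..<Suc n]"
    using assms(1) upt_conv_Cons[of "Suc 0" "Suc n"] by (simp add: numeral_2_eq_2)
  have Leq: "map lam [0..<Suc n] = \<mu> # L'"
    unfolding u1 u2 using assms(2) by (simp add: \<mu>_def L'_def L''_def)
  have lenL': "length L' = n" using assms(1) by (simp add: L'_def L''_def) arith
  have ab: "a < b" using assms(5) by simp
  have mr: "Im \<mu> = 0" using assms(3) by (simp add: \<mu>_def)
  have ccL: "cc (\<mu> # L')" using assms(4) Leq by (simp add: closed_cnj_def cc_def ESpace_ESp)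
  have fin: "finite {\<bar>Im (lam j)\<bar> |j. j \<le> n}"
  proof -
    have "{\<bar>Im (lam j)\<bar> |j. j \<le> n} = (\<lambda>j. \<bar>Im (lam j)\<bar>) ` {..n}" by auto
    then show ?thesis by simp
  qed
  have le: "\<bar>Im (lam j)\<bar> \<le> Mn lam n" if "j \<le> n" for j
    unfolding Mn_def by (rule Max_ge[OF fin]) (use that in auto)
  have bnd: "\<forall>m\<in>set (\<mu> # L'). \<bar>Im m\<bar> * (b - a) < pi"
  proof
    fix m assume "m \<in> set (\<mu> # L')"
    then have "m \<in> set (map lam [0..<Suc n])" using Leq by simp
    then have "m \<in> lam ` {0..<Suc n}" by (simp only: set_map set_upt)
    then obtain j where j0: "j \<in> {0..<Suc n}" "m = lam j" by blast
    then have j: "j \<le> n" "m = lam j" by auto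
    have lj: "\<bar>Im m\<bar> \<le> Mn lam n" using le j by simp
    show "\<bar>Im m\<bar> * (b - a) < pi"
    proof (cases "Mn lam n = 0")
      case True then have "\<bar>Im m\<bar> = 0" using lj by simp
      then show ?thesis by simp
    next
      case False
      have "0 \<le> Mn lam n" using le[of 0] by (meson abs_ge_zero order_trans zero_le)
      then have Mp: "0 < Mn lam n" using False by simp
      have "b - a < pi / Mn lam n" using assms(6) False by simp
      then have "(b - a) * Mn lam n < pi" using Mp by (simp add: pos_less_divide_eq)
      moreover have "\<bar>Im m\<bar> * (b - a) \<le> Mn lam n * (b - a)" using lj ab by (intro mult_right_mono) auto
      ultimately show ?thesis by (simp add: mult.commute)
    qed
  qed
  have gL: "good a b (\<mu> # L')" using ccL bnd by (simp add: good_def)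
  have bern_eq: "bernstein lam n a b k = bern a b (\<mu> # L') k" for k
    using bernstein_bern Leq by simp
  have len: "length (\<mu> # L') = Suc (length L')" by simp
  obtain c where c: "\<forall>x. ex \<mu> x = (\<Sum>k<length (\<mu> # L'). c k * bern a b (\<mu> # L') k x)"
    using span_bern[OF ab gL ex_in_ESp[of \<mu> "\<mu> # L'"]] by auto
  have rep: "\<forall>x. ex \<mu> x = (\<Sum>k\<le>length L'. c k * bern a b (\<mu> # L') k x)"
    using c unfolding len lessThan_Suc_atMost .
  interpret S: setting a b \<mu> L' c by (rule setting.intro[OF ab gL mr rep])
  obtain d where d: "\<forall>x. xex \<mu> x = (\<Sum>k<length (\<mu> # L'). d k * bern a b (\<mu> # L') k x)"
    using span_bern[OF ab gL xex_in_ESp[of "\<mu> # L'" \<mu> L'']] L'_def by auto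
  have repd: "\<forall>x. xex \<mu> x = (\<Sum>k\<le>length L'. d k * bern a b (\<mu> # L') k x)"
    using d unfolding len lessThan_Suc_atMost .
  have rx: "realf (xex \<mu>)" unfolding xex_def by (intro realf_mult realf_ofreal realf_ex mr)
  have d_real: "\<forall>k\<le>length L'. Im (d k) = 0" using rep_real[OF ab gL rx d] by (simp add: less_Suc_eq_le)
  have gL'': "good a b (\<mu> # L'')" using S.gL' L'_def by simp
  obtain e where e: "\<forall>x. ex \<mu> x = (\<Sum>k<length (\<mu> # L''). e k * bern a b (\<mu> # L'') k x)"
    using span_bern[OF ab gL'' ex_in_ESp[of \<mu> "\<mu> # L''"]] by auto
  have repe: "\<forall>x. ex \<mu> x = (\<Sum>k\<le>length L''. e k * bern a b (\<mu> # L'') k x)"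
    using e unfolding length_Cons lessThan_Suc_atMost .
  have mono: "\<forall>k<length L'. Re (d k) / Re (c k) < Re (d (Suc k)) / Re (c (Suc k))"
    by (rule S.t_mono[OF L'_def repe repd d_real])
  have ends: "d 0 = of_real a * c 0" "d (length L') = of_real b * c (length L')"
    using S.t_ends[OF repd] by auto
  define t where "t k = Re (d k) / Re (c k)" for k
  define \<alpha> where "\<alpha> k = Re (c k) * exp (- (Re \<mu> * t k))" for k
  have cpos: "Re (c k) > 0" if "k \<le> n" for k using S.c_pos that lenL' by simp
  have cof: "c k = of_real (Re (c k))" if "k \<le> n" for k using S.c_ofreal that lenL' by simp
  have dk: "d k = of_real (t k) * c k" if "k \<le> n" for k
    using cpos[OF that] d_real that lenL' cof[OF that] by (simp add: t_def complex_eq_iff)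
  have exr: "ex \<mu> y = of_real (exp (Re \<mu> * y))" for y by (rule ex_real[OF mr])
  have A: "of_real (\<alpha> k) * ex \<mu> (t k) = c k" if "k \<le> n" for k
  proof -
    have "of_real (\<alpha> k) * ex \<mu> (t k) = of_real (Re (c k) * exp (- (Re \<mu> * t k)) * exp (Re \<mu> * t k))"
      by (simp add: \<alpha>_def exr)
    also have "\<dots> = of_real (Re (c k))" by (simp add: exp_minus field_simps)
    finally show ?thesis using cof[OF that] by simp
  qed
  have B: "of_real (\<alpha> k) * (of_real (t k) * ex \<mu> (t k)) = d k" if "k \<le> n" for k
    using A[OF that] dk[OF that] by (simp add: algebra_simps)
  have gn: "good_nodes lam n a b t \<alpha>"
    unfolding good_nodes_def
  proof (intro conjI)
    show "t 0 = a" using ends(1) cpos[of 0] cof[of 0] by (simp add: t_def)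
    show "t n = b" using ends(2) cpos[of n] cof[of n] lenL' by (simp add: t_def)
    show "\<forall>k<n. t k \<le> t (Suc k)" using mono lenL' by (simp add: t_def less_imp_le)
    show "\<forall>k\<le>n. 0 < \<alpha> k" using cpos by (simp add: \<alpha>_def)
    show "\<forall>x\<in>{a..b}. Bop lam n a b t \<alpha> (\<lambda>y. exp (lam 0 * complex_of_real y)) x = exp (lam 0 * complex_of_real x)"
    proof
      fix x
      have "Bop lam n a b t \<alpha> (\<lambda>y. exp (lam 0 * complex_of_real y)) x
          = (\<Sum>k\<le>n. c k * bern a b (\<mu> # L') k x)"
        unfolding Bop_def bern_eq by (rule sum.cong) (auto simp: A \<mu>_def[symmetric] exp_ex)
      also have "\<dots> = ex \<mu> x" using rep lenL' by simp
      finally show "Bop lam n a b t \<alpha> (\<lambda>y. exp (lam 0 * complex_of_real y)) x = exp (lam 0 * complex_of_real x)"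
        by (simp add: \<mu>_def exp_ex)
    qed
    show "\<forall>x\<in>{a..b}. Bop lam n a b t \<alpha> (\<lambda>y. complex_of_real y * exp (lam 0 * complex_of_real y)) x
        = complex_of_real x * exp (lam 0 * complex_of_real x)"
    proof
      fix x
      have "Bop lam n a b t \<alpha> (\<lambda>y. complex_of_real y * exp (lam 0 * complex_of_real y)) x
          = (\<Sum>k\<le>n. d k * bern a b (\<mu> # L') k x)"
        unfolding Bop_def bern_eq by (rule sum.cong) (auto simp: B[symmetric] \<mu>_def[symmetric] exp_ex)
      also have "\<dots> = xex \<mu> x" using repd lenL' by simp
      finally show "Bop lam n a b t \<alpha> (\<lambda>y. complex_of_real y * exp (lam 0 * complex_of_real y)) x
          = complex_of_real x * exp (lam 0 * complex_of_real x)"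
        by (simp add: \<mu>_def exp_ex xex_def)
    qed
  qed
  have uniq: "\<forall>k\<le>n. t' k = t k \<and> \<alpha>' k = \<alpha> k" if g': "good_nodes lam n a b t' \<alpha>'" for t' \<alpha>'
  proof -
    have e1: "\<forall>x\<in>{a..b}. (\<Sum>k\<le>n. of_real (\<alpha>' k) * ex \<mu> (t' k) * bern a b (\<mu> # L') k x) = ex \<mu> x"
      using g' unfolding good_nodes_def Bop_def bern_eq by (simp add: \<mu>_def exp_ex)
    have e2: "\<forall>x\<in>{a..b}. (\<Sum>k\<le>n. of_real (\<alpha>' k) * (of_real (t' k) * ex \<mu> (t' k)) * bern a b (\<mu> # L') k x) = xex \<mu> x"
      using g' unfolding good_nodes_def Bop_def bern_eq by (simp add: \<mu>_def exp_ex xex_def mult.assoc)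
    have z1: "\<forall>x\<in>{a..b}. (\<Sum>k<length (\<mu> # L'). (of_real (\<alpha>' k) * ex \<mu> (t' k) - c k) * bern a b (\<mu> # L') k x) = 0"
    proof
      fix x assume x: "x \<in> {a..b}"
      have "(\<Sum>k<length (\<mu> # L'). (of_real (\<alpha>' k) * ex \<mu> (t' k) - c k) * bern a b (\<mu> # L') k x)
        = (\<Sum>k\<le>n. of_real (\<alpha>' k) * ex \<mu> (t' k) * bern a b (\<mu> # L') k x) - (\<Sum>k\<le>n. c k * bern a b (\<mu> # L') k x)"
        by (simp only: len lenL' lessThan_Suc_atMost left_diff_distrib sum_subtractf)
      also have "\<dots> = 0" using e1 x rep lenL' by simp
      finally show "(\<Sum>k<length (\<mu> # L'). (of_real (\<alpha>' k) * ex \<mu> (t' k) - c k) * bern a b (\<mu> # L') k x) = 0" .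
    qed
    have z2: "\<forall>x\<in>{a..b}. (\<Sum>k<length (\<mu> # L'). (of_real (\<alpha>' k) * (of_real (t' k) * ex \<mu> (t' k)) - d k) * bern a b (\<mu> # L') k x) = 0"
    proof
      fix x assume x: "x \<in> {a..b}"
      have "(\<Sum>k<length (\<mu> # L'). (of_real (\<alpha>' k) * (of_real (t' k) * ex \<mu> (t' k)) - d k) * bern a b (\<mu> # L') k x)
        = (\<Sum>k\<le>n. of_real (\<alpha>' k) * (of_real (t' k) * ex \<mu> (t' k)) * bern a b (\<mu> # L') k x) - (\<Sum>k\<le>n. d k * bern a b (\<mu> # L') k x)"
        by (simp only: len lenL' lessThan_Suc_atMost left_diff_distrib sum_subtractf)
      also have "\<dots> = 0" using e2 x repd lenL' by simp
      finally show "(\<Sum>k<length (\<mu> # L'). (of_real (\<alpha>' k) * (of_real (t' k) * ex \<mu> (t' k)) - d k) * bern a b (\<mu> # L') k x) = 0" .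
    qed
    have A': "of_real (\<alpha>' k) * ex \<mu> (t' k) = c k" if "k \<le> n" for k
      using indep_bern[OF ab gL z1] that lenL' by simp
    have B': "of_real (\<alpha>' k) * (of_real (t' k) * ex \<mu> (t' k)) = d k" if "k \<le> n" for k
      using indep_bern[OF ab gL z2] that lenL' by simp
    show ?thesis
    proof (intro allI impI conjI)
      fix k assume k: "k \<le> n"
      have "d k = of_real (t' k) * (of_real (\<alpha>' k) * ex \<mu> (t' k))"
        using B'[OF k] by (simp only: ac_simps)
      then have "d k = of_real (t' k) * c k" using A'[OF k] by simp
      then have "Re (d k) = t' k * Re (c k)" by simp
      then show tt: "t' k = t k" using cpos[OF k] by (simp add: t_def)
      have "\<alpha>' k * exp (Re \<mu> * t' k) = Re (c k)"
        using arg_cong[OF A'[OF k], of Re] by (simp add: exr)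
      then show "\<alpha>' k = \<alpha> k" unfolding \<alpha>_def tt[symmetric] by (simp add: exp_minus field_simps)
    qed
  qed
  show ?thesis using gn uniq by blast
qed


end
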